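(* Let $K\subseteq\mathbb{R}^n$ be a closed convex cone with apex $0$ (so that $K^\sharp=K$) and let $s=(s_\alpha)_{\alpha\in\mathbb{N}_0^n}$ be a real sequence. Then the following are equivalent: (i) $D(s)$ is a $K$-positivity preserver; (ii) $s$ is a $K^\sharp$-moment sequence.
   Context: $D(s):=\sum_\alpha\frac{s_\alpha}{\alpha!}\partial^\alpha$ on $\mathbb{R}[x_1,\dots,x_n]$. $T$ is a $K$-positivity preserver if it maps polynomials non-negative on $K$ to polynomials non-negative on $K$. $K^\sharp:=\{x\in\mathbb{R}^n: x+K\subseteq K\}$. For closed $L$, $s$ is an $L$-moment sequence if $s_\alpha=\int x^\alpha\,\mathrm{d}\mu$ for all $\alpha$ for some measure $\mu$ with $\mathrm{supp}\,\mu\subseteq L$. *)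

theory Defs
  imports "HOL-Analysis.Analysis"
begin

text \<open>Multi-indices are functions 'n => nat, points of R^n are real^'n.
A real polynomial in n variables is represented by its coefficient function
c :: ('n => nat) => real with finite support.\<close>

definition mono_eval :: "('n::finite \<Rightarrow> nat) \<Rightarrow> real^'n \<Rightarrow> real" where
  "mono_eval \<alpha> x = (\<Prod>i\<in>UNIV. (x$i) ^ (\<alpha> i))"

definition mfact :: "('n::finite \<Rightarrow> nat) \<Rightarrow> real" where
  "mfact \<alpha> = (\<Prod>i\<in>UNIV. fact (\<alpha> i))"

definition is_mpoly :: "(('n::finite \<Rightarrow> nat) \<Rightarrow> real) \<Rightarrow> bool" where
  "is_mpoly c \<longleftrightarrow> finite {\<beta>. c \<beta> \<noteq> 0}"

definition poly_fun :: "(('n::finite \<Rightarrow> nat) \<Rightarrow> real) \<Rightarrow> real^'n \<Rightarrow> real" where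
  "poly_fun c x = (\<Sum>\<beta>\<in>{\<beta>. c \<beta> \<noteq> 0}. c \<beta> * mono_eval \<beta> x)"

text \<open>Coefficients of the partial derivative \<partial>^\<alpha> p:
  \<partial>^\<alpha> x^(\<gamma>+\<alpha>) = ((\<gamma>+\<alpha>)!/\<gamma>!) x^\<gamma>.\<close>
definition pdiff :: "('n::finite \<Rightarrow> nat) \<Rightarrow> (('n \<Rightarrow> nat) \<Rightarrow> real) \<Rightarrow> ('n \<Rightarrow> nat) \<Rightarrow> real" where
  "pdiff \<alpha> c = (\<lambda>\<gamma>. c (\<lambda>i. \<gamma> i + \<alpha> i) *
      (\<Prod>i\<in>UNIV. fact (\<gamma> i + \<alpha> i) / fact (\<gamma> i)))"

text \<open>D(s) = sum_\<alpha> s_\<alpha>/\<alpha>! \<partial>^\<alpha>; on a polynomial only the finitely many \<alpha>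
  below some monomial of the support contribute (all other terms vanish).\<close>
definition Dop :: "(('n::finite \<Rightarrow> nat) \<Rightarrow> real) \<Rightarrow> (('n \<Rightarrow> nat) \<Rightarrow> real) \<Rightarrow> ('n \<Rightarrow> nat) \<Rightarrow> real" where
  "Dop s c = (\<lambda>\<gamma>. \<Sum>\<alpha>\<in>{\<alpha>. \<exists>\<beta>. c \<beta> \<noteq> 0 \<and> (\<forall>i. \<alpha> i \<le> \<beta> i)}.
      s \<alpha> / mfact \<alpha> * pdiff \<alpha> c \<gamma>)"

definition K_pos_preserver ::
  "(real^'n::finite) set \<Rightarrow> ((('n \<Rightarrow> nat) \<Rightarrow> real) \<Rightarrow> (('n \<Rightarrow> nat) \<Rightarrow> real)) \<Rightarrow> bool" where
  "K_pos_preserver K T \<longleftrightarrow>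
     (\<forall>c. is_mpoly c \<and> (\<forall>x\<in>K. poly_fun c x \<ge> 0) \<longrightarrow> (\<forall>x\<in>K. poly_fun (T c) x \<ge> 0))"

definition sharp :: "(real^'n::finite) set \<Rightarrow> (real^'n) set" where
  "sharp K = {x. \<forall>y\<in>K. x + y \<in> K}"

text \<open>For closed L, supp \<mu> \<subseteq> L iff the complement of L is \<mu>-null.\<close>
definition moment_seq :: "(real^'n::finite) set \<Rightarrow> (('n \<Rightarrow> nat) \<Rightarrow> real) \<Rightarrow> bool" where
  "moment_seq L s \<longleftrightarrow> (\<exists>M :: (real^'n) measure.
      sets M = sets borel \<and> emeasure M (space M - L) = 0 \<and>
      (\<forall>\<alpha>. integrable M (mono_eval \<alpha>) \<and> s \<alpha> = integral\<^sup>L M (mono_eval \<alpha>)))"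

end

theory Submission
  imports Defs "HOL-Real_Asymp.Real_Asymp"
begin


definition dom_set :: "'a set \<Rightarrow> (('a \<Rightarrow> real) \<times> real) set \<Rightarrow> ('a \<Rightarrow> real) set" where
  "dom_set K G0 = {e. \<exists>f a g b. (f,a)\<in>G0 \<and> (g,b)\<in>G0 \<and> (\<forall>x\<in>K. f x \<le> e x \<and> e x \<le> g x)}"

definition good_graph :: "'a set \<Rightarrow> (('a \<Rightarrow> real) \<times> real) set \<Rightarrow> (('a \<Rightarrow> real) \<times> real) set \<Rightarrow> bool" where
  "good_graph K G0 G \<longleftrightarrow> G0 \<subseteq> G \<and>
     (\<forall>f a g b. (f,a)\<in>G \<longrightarrow> (g,b)\<in>G \<longrightarrow> ((\<lambda>x. f x + g x), a + b) \<in> G) \<and>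
     (\<forall>f a c. (f,a)\<in>G \<longrightarrow> ((\<lambda>x. c * f x), c * a) \<in> G) \<and>
     (\<forall>f a. (f,a)\<in>G \<longrightarrow> (\<forall>x\<in>K. 0 \<le> f x) \<longrightarrow> 0 \<le> a) \<and>
     (\<forall>f a. (f,a)\<in>G \<longrightarrow> f \<in> dom_set K G0)"

lemma dom_setI:
  assumes "(f,a)\<in>G0" "(g,b)\<in>G0" "\<And>x. x\<in>K \<Longrightarrow> f x \<le> e x" "\<And>x. x\<in>K \<Longrightarrow> e x \<le> g x"
  shows "e \<in> dom_set K G0"
  using assms unfolding dom_set_def by blast

lemma dom_set_add:
  assumes add0: "\<And>f a g b. (f,a)\<in>G0 \<Longrightarrow> (g,b)\<in>G0 \<Longrightarrow> ((\<lambda>x. f x + g x), a+b) \<in> G0"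
  and "e \<in> dom_set K G0" "e' \<in> dom_set K G0"
  shows "(\<lambda>x. e x + e' x) \<in> dom_set K G0"
proof -
  obtain f a g b where 1: "(f,a)\<in>G0" "(g,b)\<in>G0" "\<forall>x\<in>K. f x \<le> e x \<and> e x \<le> g x"
    using assms(2) unfolding dom_set_def by blast
  obtain f' a' g' b' where 2: "(f',a')\<in>G0" "(g',b')\<in>G0" "\<forall>x\<in>K. f' x \<le> e' x \<and> e' x \<le> g' x"
    using assms(3) unfolding dom_set_def by blast
  show ?thesis unfolding dom_set_def
    apply (rule CollectI)
    apply (rule exI[of _ "\<lambda>x. f x + f' x"], rule exI[of _ "a+a'"])
    apply (rule exI[of _ "\<lambda>x. g x + g' x"], rule exI[of _ "b+b'"])
    using 1 2 add0 by (auto intro: add_mono)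
qed

lemma dom_set_smul:
  assumes smul0: "\<And>f a c. (f,a)\<in>G0 \<Longrightarrow> ((\<lambda>x. c * f x), c*a) \<in> G0"
  and "e \<in> dom_set K G0"
  shows "(\<lambda>x. c * e x) \<in> dom_set K G0"
proof -
  obtain f a g b where 1: "(f,a)\<in>G0" "(g,b)\<in>G0" "\<forall>x\<in>K. f x \<le> e x \<and> e x \<le> g x"
    using assms(2) unfolding dom_set_def by blast
  show ?thesis
  proof (cases "c \<ge> 0")
    case True
    show ?thesis
      by (rule dom_setI[OF smul0[OF 1(1)] smul0[OF 1(2)]]) (use 1(3) True in \<open>auto intro: mult_left_mono\<close>)
  next
    case False
    show ?thesis
      by (rule dom_setI[OF smul0[OF 1(2)] smul0[OF 1(1)]]) (use 1(3) False in \<open>auto intro: mult_left_mono_neg\<close>)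
  qed
qed

lemma good_graph_unique:
  assumes "good_graph K G0 G" "(f,a)\<in>G" "(g,b)\<in>G" "\<forall>x\<in>K. f x = g x"
  shows "a = b"
proof -
  have m: "((\<lambda>x. (-1) * g x), (-1) * b) \<in> G" using assms(1,3) unfolding good_graph_def by blast
  have d: "((\<lambda>x. f x + (-1) * g x), a + (-1) * b) \<in> G" using assms(1,2) m unfolding good_graph_def by blast
  have d2: "((\<lambda>x. (-1) * (f x + (-1) * g x)), (-1) * (a + (-1) * b)) \<in> G" using assms(1) d unfolding good_graph_def by blast
  have pos: "\<And>f a. (f,a)\<in>G \<Longrightarrow> (\<forall>x\<in>K. 0 \<le> f x) \<Longrightarrow> 0 \<le> a" using assms(1) unfolding good_graph_def by blast
  have "\<forall>x\<in>K. 0 \<le> f x + (-1) * g x" using assms(4) by simp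
  then have "0 \<le> a + (-1) * b" using pos[OF d] by blast
  moreover have "\<forall>x\<in>K. 0 \<le> (-1) * (f x + (-1) * g x)" using assms(4) by simp
  then have "0 \<le> (-1) * (a + (-1) * b)" using pos[OF d2] by blast
  ultimately have "a \<le> b \<and> b \<le> a" by simp
  then show ?thesis by simp
qed

lemma good_graph_extend:
  assumes G: "good_graph K G0 G"
  and add0: "\<And>f a g b. (f,a)\<in>G0 \<Longrightarrow> (g,b)\<in>G0 \<Longrightarrow> ((\<lambda>x. f x + g x), a+b) \<in> G0"
  and smul0: "\<And>f a c. (f,a)\<in>G0 \<Longrightarrow> ((\<lambda>x. c * f x), c*a) \<in> G0"
  and e: "e \<in> dom_set K G0"
  shows "\<exists>G'. good_graph K G0 G' \<and> G \<subseteq> G' \<and> (\<exists>a. (e,a) \<in> G')"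
proof -
  have Gadd: "\<And>f a g b. (f,a)\<in>G \<Longrightarrow> (g,b)\<in>G \<Longrightarrow> ((\<lambda>x. f x + g x), a + b) \<in> G"
   and Gsmul: "\<And>f a c. (f,a)\<in>G \<Longrightarrow> ((\<lambda>x. c * f x), c * a) \<in> G"
   and Gpos: "\<And>f a. (f,a)\<in>G \<Longrightarrow> (\<forall>x\<in>K. 0 \<le> f x) \<Longrightarrow> 0 \<le> a"
   and Gdom: "\<And>f a. (f,a)\<in>G \<Longrightarrow> f \<in> dom_set K G0"
   and G0G: "G0 \<subseteq> G"
    using G unfolding good_graph_def by blast+
  have Gmono: "a \<le> b" if "(f,a)\<in>G" "(g,b)\<in>G" "\<forall>x\<in>K. f x \<le> g x" for f a g b
  proof -
    have "((\<lambda>x. g x + (-1) * f x), b + (-1) * a) \<in> G" using Gadd[OF that(2) Gsmul[OF that(1)]] .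
    moreover have "\<forall>x\<in>K. 0 \<le> g x + (-1) * f x" using that(3) by simp
    ultimately have "0 \<le> b + (-1) * a" using Gpos by blast
    then show ?thesis by simp
  qed
  obtain f0 a0 g0 b0 where fg0: "(f0,a0)\<in>G0" "(g0,b0)\<in>G0" "\<forall>x\<in>K. f0 x \<le> e x \<and> e x \<le> g0 x"
    using e unfolding dom_set_def by blast
  define S where "S = {a. \<exists>f. (f,a)\<in>G \<and> (\<forall>x\<in>K. f x \<le> e x)}"
  define c where "c = Sup S"
  have S_ne: "S \<noteq> {}" unfolding S_def using fg0 G0G by blast
  have S_bdd: "a \<le> b0" if aS: "a \<in> S" for a
  proof -
    obtain f where "(f,a)\<in>G" "\<forall>x\<in>K. f x \<le> e x" using aS unfolding S_def by blast
    then show ?thesis using Gmono[of f a g0 b0] fg0 G0G by force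
  qed
  have bddS: "bdd_above S" using S_bdd by (auto simp: bdd_above_def)
  have c_ge: "a \<le> c" if "a \<in> S" for a unfolding c_def using that bddS by (rule cSup_upper)
  have c_le: "c \<le> y" if "\<And>a. a \<in> S \<Longrightarrow> a \<le> y" for y unfolding c_def using S_ne that by (rule cSup_least)
  define G' where "G' = {((\<lambda>x. f x + t * e x), a + t * c) | f a t. (f,a)\<in>G}"
  have G'I: "((\<lambda>x. f x + t * e x), a + t * c) \<in> G'" if "(f,a)\<in>G" for f a t
    unfolding G'_def using that by blast
  have sub: "G \<subseteq> G'"
  proof
    fix p assume "p \<in> G"
    then obtain f a where p: "p = (f,a)" "(f,a)\<in>G" by (cases p) auto
    have "((\<lambda>x. f x + 0 * e x), a + 0 * c) \<in> G'" using G'I p(2) .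
    then show "p \<in> G'" using p(1) by simp
  qed
  have eG': "(e, 0 + 1 * c) \<in> G'"
  proof -
    have "((\<lambda>x. 0 * f0 x), 0 * a0) \<in> G" using Gsmul fg0 G0G by blast
    then have "((\<lambda>x. (\<lambda>x. 0 * f0 x) x + 1 * e x), 0 * a0 + 1 * c) \<in> G'" by (rule G'I)
    then show ?thesis by simp
  qed
  have "good_graph K G0 G'"
    unfolding good_graph_def
  proof (intro conjI allI impI)
    show "G0 \<subseteq> G'" using G0G sub by blast
  next
    fix f a g b assume "(f,a)\<in>G'" "(g,b)\<in>G'"
    then obtain f1 a1 t1 f2 a2 t2 where 1: "f = (\<lambda>x. f1 x + t1 * e x)" "a = a1 + t1 * c" "(f1,a1)\<in>G"
      and 2: "g = (\<lambda>x. f2 x + t2 * e x)" "b = a2 + t2 * c" "(f2,a2)\<in>G"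
      unfolding G'_def by blast
    have "((\<lambda>x. f1 x + f2 x), a1 + a2) \<in> G" using Gadd 1 2 by blast
    then have "((\<lambda>x. (\<lambda>x. f1 x + f2 x) x + (t1+t2) * e x), (a1 + a2) + (t1+t2) * c) \<in> G'"
      by (rule G'I)
    moreover have "(\<lambda>x. (\<lambda>x. f1 x + f2 x) x + (t1+t2) * e x) = (\<lambda>x. f x + g x)"
      using 1 2 by (auto simp: algebra_simps)
    moreover have "(a1 + a2) + (t1+t2) * c = a + b" using 1 2 by (simp add: algebra_simps)
    ultimately show "((\<lambda>x. f x + g x), a + b) \<in> G'" by simp
  next
    fix f a r assume "(f,a)\<in>G'"
    then obtain f1 a1 t1 where 1: "f = (\<lambda>x. f1 x + t1 * e x)" "a = a1 + t1 * c" "(f1,a1)\<in>G"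
      unfolding G'_def by blast
    have "((\<lambda>x. r * f1 x), r * a1) \<in> G" using Gsmul 1 by blast
    then have "((\<lambda>x. (\<lambda>x. r * f1 x) x + (r*t1) * e x), r * a1 + (r*t1) * c) \<in> G'"
      by (rule G'I)
    moreover have "(\<lambda>x. (\<lambda>x. r * f1 x) x + (r*t1) * e x) = (\<lambda>x. r * f x)"
      using 1 by (auto simp: algebra_simps)
    moreover have "r * a1 + (r*t1) * c = r * a" using 1 by (simp add: algebra_simps)
    ultimately show "((\<lambda>x. r * f x), r * a) \<in> G'" by simp
  next
    fix f a assume fa: "(f,a)\<in>G'" and nn: "\<forall>x\<in>K. 0 \<le> f x"
    then obtain f1 a1 t where 1: "f = (\<lambda>x. f1 x + t * e x)" "a = a1 + t * c" "(f1,a1)\<in>G"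
      unfolding G'_def by blast
    show "0 \<le> a"
    proof (cases t "0::real" rule: linorder_cases)
      case equal
      then show ?thesis using 1 nn Gpos by auto
    next
      case greater
      have "((\<lambda>x. (-1/t) * f1 x), (-1/t) * a1) \<in> G" using Gsmul 1 by blast
      moreover have "\<forall>x\<in>K. (-1/t) * f1 x \<le> e x"
      proof
        fix x assume "x \<in> K"
        then have "0 \<le> f1 x + t * e x" using nn 1 by auto
        then show "(-1/t) * f1 x \<le> e x" using greater by (simp add: field_simps)
      qed
      ultimately have "(-1/t) * a1 \<in> S" unfolding S_def by blast
      then have "(-1/t) * a1 \<le> c" by (rule c_ge)
      then show ?thesis using greater 1 by (simp add: field_simps)
    next
      case less
      have "c \<le> a1 / (-t)"
      proof (rule c_le)
        fix b assume "b \<in> S"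
        then obtain g where g: "(g,b)\<in>G" "\<forall>x\<in>K. g x \<le> e x" unfolding S_def by blast
        have "((\<lambda>x. (1/(-t)) * f1 x), (1/(-t)) * a1) \<in> G" using Gsmul 1 by blast
        moreover have "\<forall>x\<in>K. g x \<le> (1/(-t)) * f1 x"
        proof
          fix x assume "x \<in> K"
          then have "0 \<le> f1 x + t * e x" "g x \<le> e x" using nn 1 g by auto
          then show "g x \<le> (1/(-t)) * f1 x" using less by (simp add: field_simps) (smt (verit) mult_left_mono_neg)
        qed
        ultimately have "b \<le> (1/(-t)) * a1" using Gmono g by blast
        then show "b \<le> a1 / (-t)" by simp
      qed
      then show ?thesis using less 1 by (simp add: field_simps)
    qed
  next
    fix f a assume "(f,a)\<in>G'"
    then obtain f1 a1 t where 1: "f = (\<lambda>x. f1 x + t * e x)" "(f1,a1)\<in>G"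
      unfolding G'_def by blast
    have "(\<lambda>x. t * e x) \<in> dom_set K G0" by (rule dom_set_smul[OF smul0 e])
    then show "f \<in> dom_set K G0" unfolding 1(1) using dom_set_add[OF add0] Gdom[OF 1(2)] by blast
  qed
  then show ?thesis using sub eG' by blast
qed

lemma riesz_extension:
  fixes K :: "'a set" and G0 :: "(('a \<Rightarrow> real) \<times> real) set"
  assumes add0: "\<And>f a g b. (f,a)\<in>G0 \<Longrightarrow> (g,b)\<in>G0 \<Longrightarrow> ((\<lambda>x. f x + g x), a+b) \<in> G0"
  and smul0: "\<And>f a c. (f,a)\<in>G0 \<Longrightarrow> ((\<lambda>x. c * f x), c*a) \<in> G0"
  and pos0: "\<And>f a. (f,a)\<in>G0 \<Longrightarrow> \<forall>x\<in>K. 0 \<le> f x \<Longrightarrow> 0 \<le> a"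
  shows "\<exists>\<Lambda>. (\<forall>f a. (f,a)\<in>G0 \<longrightarrow> \<Lambda> f = a) \<and>
     (\<forall>e\<in>dom_set K G0. \<forall>e'\<in>dom_set K G0. \<Lambda> (\<lambda>x. e x + e' x) = \<Lambda> e + \<Lambda> e') \<and>
     (\<forall>e\<in>dom_set K G0. \<forall>c. \<Lambda> (\<lambda>x. c * e x) = c * \<Lambda> e) \<and>
     (\<forall>e\<in>dom_set K G0. (\<forall>x\<in>K. 0 \<le> e x) \<longrightarrow> 0 \<le> \<Lambda> e)"
proof -
  let ?A = "{G. good_graph K G0 G}"
  have G0dom: "f \<in> dom_set K G0" if "(f,a)\<in>G0" for f a
    by (rule dom_setI[OF that that]) auto
  have G0_good: "good_graph K G0 G0"
    unfolding good_graph_def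
  proof (intro conjI allI impI)
    show "G0 \<subseteq> G0" by simp
  next
    fix f a g b assume "(f,a)\<in>G0" "(g,b)\<in>G0" then show "((\<lambda>x. f x + g x), a + b) \<in> G0" by (rule add0)
  next
    fix f a c assume "(f,a)\<in>G0" then show "((\<lambda>x. c * f x), c * a) \<in> G0" by (rule smul0)
  next
    fix f a assume "(f,a)\<in>G0" "\<forall>x\<in>K. 0 \<le> f x" then show "0 \<le> a" by (rule pos0)
  next
    fix f a assume "(f,a)\<in>G0" then show "f \<in> dom_set K G0" by (rule G0dom)
  qed
  have chain_ub: "\<exists>U\<in>?A. \<forall>X\<in>C. X \<subseteq> U" if C: "C \<in> chains ?A" for C
  proof (cases "C = {}")
    case True
    then show ?thesis using G0_good by blast
  next
    case False
    have CA: "\<And>X. X \<in> C \<Longrightarrow> good_graph K G0 X" using C unfolding chains_def by blast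
    have ch: "\<And>X Y. X \<in> C \<Longrightarrow> Y \<in> C \<Longrightarrow> X \<subseteq> Y \<or> Y \<subseteq> X" using C chainsD by blast
    have "good_graph K G0 (\<Union>C)"
      unfolding good_graph_def
    proof (intro conjI allI impI)
      obtain X where "X \<in> C" using False by blast
      then show "G0 \<subseteq> \<Union>C" using CA[of X] unfolding good_graph_def by blast
    next
      fix f a g b assume "(f,a) \<in> \<Union>C" "(g,b) \<in> \<Union>C"
      then obtain X Y where XY: "X\<in>C" "Y\<in>C" "(f,a)\<in>X" "(g,b)\<in>Y" by blast
      show "((\<lambda>x. f x + g x), a + b) \<in> \<Union>C"
      proof (cases "X \<subseteq> Y")
        case True
        then have "((\<lambda>x. f x + g x), a + b) \<in> Y" using CA[OF XY(2)] XY unfolding good_graph_def by blast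
        then show ?thesis using XY by blast
      next
        case False
        then have "Y \<subseteq> X" using ch XY by blast
        then have "((\<lambda>x. f x + g x), a + b) \<in> X" using CA[OF XY(1)] XY unfolding good_graph_def by blast
        then show ?thesis using XY by blast
      qed
    next
      fix f a c assume "(f,a) \<in> \<Union>C"
      then obtain X where X: "X\<in>C" "(f,a)\<in>X" by blast
      then have "((\<lambda>x. c * f x), c * a) \<in> X" using CA[OF X(1)] unfolding good_graph_def by blast
      then show "((\<lambda>x. c * f x), c * a) \<in> \<Union>C" using X by blast
    next
      fix f a assume "(f,a) \<in> \<Union>C" "\<forall>x\<in>K. 0 \<le> f x"
      then obtain X where X: "X\<in>C" "(f,a)\<in>X" by blast
      then show "0 \<le> a" using CA[OF X(1)] \<open>\<forall>x\<in>K. 0 \<le> f x\<close> unfolding good_graph_def by blast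
    next
      fix f a assume "(f,a) \<in> \<Union>C"
      then obtain X where X: "X\<in>C" "(f,a)\<in>X" by blast
      then show "f \<in> dom_set K G0" using CA[OF X(1)] unfolding good_graph_def by blast
    qed
    then show ?thesis by blast
  qed
  have "\<exists>M\<in>?A. \<forall>X\<in>?A. M \<subseteq> X \<longrightarrow> X = M"
    by (rule Zorn_Lemma2) (use chain_ub in blast)
  then obtain Gm where Gm: "good_graph K G0 Gm" and max: "\<And>X. good_graph K G0 X \<Longrightarrow> Gm \<subseteq> X \<Longrightarrow> X = Gm"
    by auto
  have full: "\<exists>a. (e,a)\<in>Gm" if e_in: "e \<in> dom_set K G0" for e
  proof -
    obtain G' where "good_graph K G0 G'" "Gm \<subseteq> G'" "\<exists>a. (e,a) \<in> G'"
      using good_graph_extend[OF Gm add0 smul0 e_in] by blast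
    then show ?thesis using max by blast
  qed
  define \<Lambda> where "\<Lambda> e = (THE a. (e,a)\<in>Gm)" for e
  have Lam_eq: "\<Lambda> e = a" if "(e,a)\<in>Gm" for e a
  proof -
    have "\<And>b. (e,b)\<in>Gm \<Longrightarrow> b = a" using good_graph_unique[OF Gm _ that] by blast
    then show ?thesis unfolding \<Lambda>_def using that by (rule the_equality[rotated])
  qed
  have Lam: "(e, \<Lambda> e) \<in> Gm" if e_in: "e \<in> dom_set K G0" for e
  proof -
    obtain a where a: "(e,a)\<in>Gm" using full e_in by blast
    then show ?thesis using Lam_eq[OF a] by simp
  qed
  have Gmadd: "\<And>f a g b. (f,a)\<in>Gm \<Longrightarrow> (g,b)\<in>Gm \<Longrightarrow> ((\<lambda>x. f x + g x), a + b) \<in> Gm"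
   and Gmsmul: "\<And>f a c. (f,a)\<in>Gm \<Longrightarrow> ((\<lambda>x. c * f x), c * a) \<in> Gm"
   and Gmpos: "\<And>f a. (f,a)\<in>Gm \<Longrightarrow> (\<forall>x\<in>K. 0 \<le> f x) \<Longrightarrow> 0 \<le> a"
   and G0Gm: "G0 \<subseteq> Gm"
    using Gm unfolding good_graph_def by blast+
  show ?thesis
  proof (intro exI[of _ \<Lambda>] conjI ballI allI impI)
    fix f a assume "(f,a)\<in>G0" then show "\<Lambda> f = a" using G0Gm Lam_eq by blast
  next
    fix e e' assume "e \<in> dom_set K G0" "e' \<in> dom_set K G0"
    then show "\<Lambda> (\<lambda>x. e x + e' x) = \<Lambda> e + \<Lambda> e'" using Lam_eq[OF Gmadd[OF Lam Lam]] by blast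
  next
    fix e c assume "e \<in> dom_set K G0"
    then show "\<Lambda> (\<lambda>x. c * e x) = c * \<Lambda> e" using Lam_eq[OF Gmsmul[OF Lam]] by blast
  next
    fix e assume "e \<in> dom_set K G0" "\<forall>x\<in>K. 0 \<le> e x"
    then show "0 \<le> \<Lambda> e" using Gmpos[OF Lam] by blast
  qed
qed


lemma finite_le_multi: "finite {\<alpha>::'n::finite \<Rightarrow> nat. \<forall>i. \<alpha> i \<le> \<beta> i}"
proof -
  have "{\<alpha>::'n \<Rightarrow> nat. \<forall>i. \<alpha> i \<le> \<beta> i} \<subseteq> Pi\<^sub>E UNIV (\<lambda>i. {..\<beta> i})"
    by (auto simp: PiE_def extensional_def)
  moreover have "finite (Pi\<^sub>E (UNIV::'n set) (\<lambda>i. {..\<beta> i}))" by (intro finite_PiE) auto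
  ultimately show ?thesis by (rule finite_subset)
qed

lemma le_multi_PiE: "{\<alpha>::'n::finite \<Rightarrow> nat. \<forall>i. \<alpha> i \<le> \<beta> i} = Pi\<^sub>E UNIV (\<lambda>i. {..\<beta> i})"
  by (auto simp: PiE_def extensional_def)

definition Aset :: "(('n::finite \<Rightarrow> nat) \<Rightarrow> real) \<Rightarrow> ('n \<Rightarrow> nat) set" where
  "Aset c = {\<alpha>. \<exists>\<beta>. c \<beta> \<noteq> 0 \<and> (\<forall>i. \<alpha> i \<le> \<beta> i)}"

lemma finite_Aset: "is_mpoly c \<Longrightarrow> finite (Aset c)"
proof -
  assume "is_mpoly c"
  then have "finite {\<beta>. c \<beta> \<noteq> 0}" unfolding is_mpoly_def .
  moreover have "Aset c = (\<Union>\<beta>\<in>{\<beta>. c \<beta> \<noteq> 0}. {\<alpha>. \<forall>i. \<alpha> i \<le> \<beta> i})" unfolding Aset_def by blast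
  ultimately show ?thesis using finite_le_multi by auto
qed

lemma supp_Aset: "{\<beta>. c \<beta> \<noteq> 0} \<subseteq> Aset c"
  unfolding Aset_def by auto

lemma poly_fun_eq:
  assumes "finite S" "{\<beta>. c \<beta> \<noteq> 0} \<subseteq> S"
  shows "poly_fun c x = (\<Sum>\<beta>\<in>S. c \<beta> * mono_eval \<beta> x)"
  unfolding poly_fun_def
  by (rule sum.mono_neutral_left) (use assms in auto)

lemma mono_eval_add: "mono_eval (\<lambda>i. \<alpha> i + \<beta> i) x = mono_eval \<alpha> x * mono_eval \<beta> x"
  unfolding mono_eval_def by (simp add: power_add prod.distrib)

lemma mono_eval_zero: "mono_eval \<gamma> (0::real^'n::finite) = (if \<gamma> = (\<lambda>_. 0) then 1 else 0)"
proof (cases "\<gamma> = (\<lambda>_. 0)")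
  case True then show ?thesis by (simp add: mono_eval_def)
next
  case False
  then obtain i where "\<gamma> i \<noteq> 0" by auto
  then have "(0::real) ^ \<gamma> i = 0" by simp
  then have "mono_eval \<gamma> (0::real^'n) = 0" unfolding mono_eval_def
    by (intro prod_zero) auto
  then show ?thesis using False by simp
qed

lemma Dop_supp:
  assumes "is_mpoly c"
  shows "{\<gamma>. Dop s c \<gamma> \<noteq> 0} \<subseteq> Aset c"
proof
  fix \<gamma> assume "\<gamma> \<in> {\<gamma>. Dop s c \<gamma> \<noteq> 0}"
  then obtain \<alpha> where "pdiff \<alpha> c \<gamma> \<noteq> 0" unfolding Dop_def
    by (metis (mono_tags, lifting) mem_Collect_eq mult_zero_right sum.neutral)
  then have "c (\<lambda>i. \<gamma> i + \<alpha> i) \<noteq> 0" unfolding pdiff_def by auto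
  then show "\<gamma> \<in> Aset c" unfolding Aset_def by (intro CollectI exI[of _ "\<lambda>i. \<gamma> i + \<alpha> i"]) auto
qed

lemma is_mpoly_Dop: "is_mpoly c \<Longrightarrow> is_mpoly (Dop s c)"
  unfolding is_mpoly_def using Dop_supp finite_Aset finite_subset
  by (metis is_mpoly_def)

lemma Dop_expand:
  fixes c :: "('n::finite \<Rightarrow> nat) \<Rightarrow> real"
  assumes c: "is_mpoly c"
  shows "poly_fun (Dop s c) x =
    (\<Sum>\<beta>\<in>{\<beta>. c \<beta> \<noteq> 0}. c \<beta> * (\<Sum>\<alpha>\<in>{\<alpha>. \<forall>i. \<alpha> i \<le> \<beta> i}.
        s \<alpha> * (\<Prod>i\<in>UNIV. real (\<beta> i choose \<alpha> i)) * mono_eval (\<lambda>i. \<beta> i - \<alpha> i) x))"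
proof -
  define A where "A = Aset c"
  define B where "B = {\<beta>. c \<beta> \<noteq> 0}"
  have fA: "finite A" unfolding A_def using finite_Aset[OF c] .
  have fB: "finite B" using c unfolding B_def is_mpoly_def .
  have BA: "B \<subseteq> A" unfolding A_def B_def by (rule supp_Aset)
  define T where "T \<alpha> \<beta> = c \<beta> * (s \<alpha> * (\<Prod>i\<in>UNIV. real (\<beta> i choose \<alpha> i)) * mono_eval (\<lambda>i. \<beta> i - \<alpha> i) x)" for \<alpha> \<beta>
  have "poly_fun (Dop s c) x = (\<Sum>\<gamma>\<in>A. Dop s c \<gamma> * mono_eval \<gamma> x)"
    by (rule poly_fun_eq[OF fA]) (use Dop_supp[OF c] in \<open>simp add: A_def\<close>)
  also have "\<dots> = (\<Sum>\<gamma>\<in>A. \<Sum>\<alpha>\<in>A. s \<alpha> / mfact \<alpha> * pdiff \<alpha> c \<gamma> * mono_eval \<gamma> x)"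
    unfolding Dop_def A_def Aset_def by (simp add: sum_distrib_right)
  also have "\<dots> = (\<Sum>\<alpha>\<in>A. \<Sum>\<gamma>\<in>A. s \<alpha> / mfact \<alpha> * pdiff \<alpha> c \<gamma> * mono_eval \<gamma> x)"
    by (rule sum.swap)
  also have "\<dots> = (\<Sum>\<alpha>\<in>A. \<Sum>\<beta>\<in>{\<beta>\<in>B. \<forall>i. \<alpha> i \<le> \<beta> i}. T \<alpha> \<beta>)"
  proof (rule sum.cong[OF refl])
    fix \<alpha> assume "\<alpha> \<in> A"
    have "(\<Sum>\<gamma>\<in>A. s \<alpha> / mfact \<alpha> * pdiff \<alpha> c \<gamma> * mono_eval \<gamma> x) =
          (\<Sum>\<gamma>\<in>{\<gamma>\<in>A. c (\<lambda>i. \<gamma> i + \<alpha> i) \<noteq> 0}. s \<alpha> / mfact \<alpha> * pdiff \<alpha> c \<gamma> * mono_eval \<gamma> x)"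
      by (rule sum.mono_neutral_right[OF fA]) (auto simp: pdiff_def)
    also have "\<dots> = (\<Sum>\<beta>\<in>{\<beta>\<in>B. \<forall>i. \<alpha> i \<le> \<beta> i}. T \<alpha> \<beta>)"
    proof (rule sum.reindex_bij_witness[where j = "\<lambda>\<gamma> i. \<gamma> i + \<alpha> i" and i = "\<lambda>\<beta> i. \<beta> i - \<alpha> i"])
      fix \<gamma> assume "\<gamma> \<in> {\<gamma>\<in>A. c (\<lambda>i. \<gamma> i + \<alpha> i) \<noteq> 0}"
      then show "(\<lambda>i. (\<lambda>i. \<gamma> i + \<alpha> i) i - \<alpha> i) = \<gamma>" by simp
    next
      fix \<gamma> assume "\<gamma> \<in> {\<gamma>\<in>A. c (\<lambda>i. \<gamma> i + \<alpha> i) \<noteq> 0}"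
      then show "(\<lambda>i. \<gamma> i + \<alpha> i) \<in> {\<beta>\<in>B. \<forall>i. \<alpha> i \<le> \<beta> i}" by (simp add: B_def)
    next
      fix \<beta> assume b: "\<beta> \<in> {\<beta>\<in>B. \<forall>i. \<alpha> i \<le> \<beta> i}"
      then show "(\<lambda>i. (\<lambda>i. \<beta> i - \<alpha> i) i + \<alpha> i) = \<beta>" by auto
    next
      fix \<beta> assume b: "\<beta> \<in> {\<beta>\<in>B. \<forall>i. \<alpha> i \<le> \<beta> i}"
      then have "(\<lambda>i. (\<lambda>i. \<beta> i - \<alpha> i) i + \<alpha> i) = \<beta>" by auto
      moreover have "(\<lambda>i. \<beta> i - \<alpha> i) \<in> A" using b unfolding A_def Aset_def B_def by auto
      ultimately show "(\<lambda>i. \<beta> i - \<alpha> i) \<in> {\<gamma>\<in>A. c (\<lambda>i. \<gamma> i + \<alpha> i) \<noteq> 0}" using b by (simp add: B_def)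
    next
      fix \<gamma> assume "\<gamma> \<in> {\<gamma>\<in>A. c (\<lambda>i. \<gamma> i + \<alpha> i) \<noteq> 0}"
      define \<beta> where "\<beta> = (\<lambda>i. \<gamma> i + \<alpha> i)"
      have g: "(\<lambda>i. \<beta> i - \<alpha> i) = \<gamma>" unfolding \<beta>_def by simp
      have ch: "(\<Prod>i\<in>UNIV. real (\<beta> i choose \<alpha> i)) = (\<Prod>i\<in>UNIV. fact (\<beta> i) / fact (\<gamma> i)) / mfact \<alpha>"
      proof -
        have "(\<Prod>i\<in>UNIV. real (\<beta> i choose \<alpha> i)) = (\<Prod>i\<in>UNIV. (fact (\<beta> i) / fact (\<gamma> i)) / fact (\<alpha> i))"
        proof (rule prod.cong[OF refl])
          fix i
          have "real (\<beta> i choose \<alpha> i) = fact (\<beta> i) / (fact (\<alpha> i) * fact (\<beta> i - \<alpha> i))"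
            by (rule binomial_fact) (simp add: \<beta>_def)
          then show "real (\<beta> i choose \<alpha> i) = (fact (\<beta> i) / fact (\<gamma> i)) / fact (\<alpha> i)"
            by (simp add: \<beta>_def field_simps)
        qed
        also have "\<dots> = (\<Prod>i\<in>UNIV. fact (\<beta> i) / fact (\<gamma> i)) / mfact \<alpha>"
          unfolding mfact_def by (rule prod_dividef)
        finally show ?thesis .
      qed
      show "T \<alpha> (\<lambda>i. \<gamma> i + \<alpha> i) = s \<alpha> / mfact \<alpha> * pdiff \<alpha> c \<gamma> * mono_eval \<gamma> x"
        unfolding T_def pdiff_def \<beta>_def[symmetric] g ch by (simp add: \<beta>_def field_simps)
    qed
    finally show "(\<Sum>\<gamma>\<in>A. s \<alpha> / mfact \<alpha> * pdiff \<alpha> c \<gamma> * mono_eval \<gamma> x) = (\<Sum>\<beta>\<in>{\<beta>\<in>B. \<forall>i. \<alpha> i \<le> \<beta> i}. T \<alpha> \<beta>)" .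
  qed
  also have "\<dots> = (\<Sum>\<beta>\<in>B. \<Sum>\<alpha>\<in>{\<alpha>\<in>A. \<forall>i. \<alpha> i \<le> \<beta> i}. T \<alpha> \<beta>)"
    by (rule sum.swap_restrict[OF fA fB])
  also have "\<dots> = (\<Sum>\<beta>\<in>B. \<Sum>\<alpha>\<in>{\<alpha>. \<forall>i. \<alpha> i \<le> \<beta> i}. T \<alpha> \<beta>)"
  proof (rule sum.cong[OF refl])
    fix \<beta> assume "\<beta> \<in> B"
    then have "{\<alpha>\<in>A. \<forall>i. \<alpha> i \<le> \<beta> i} = {\<alpha>. \<forall>i. \<alpha> i \<le> \<beta> i}" unfolding A_def Aset_def B_def by auto
    then show "(\<Sum>\<alpha>\<in>{\<alpha>\<in>A. \<forall>i. \<alpha> i \<le> \<beta> i}. T \<alpha> \<beta>) = (\<Sum>\<alpha>\<in>{\<alpha>. \<forall>i. \<alpha> i \<le> \<beta> i}. T \<alpha> \<beta>)" by simp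
  qed
  finally show ?thesis unfolding T_def B_def by (simp add: sum_distrib_left)
qed

lemma mono_eval_binomial:
  fixes x y :: "real^'n::finite"
  shows "mono_eval \<beta> (x + y) = (\<Sum>\<alpha>\<in>{\<alpha>. \<forall>i. \<alpha> i \<le> \<beta> i}.
      (\<Prod>i\<in>UNIV. real (\<beta> i choose \<alpha> i)) * mono_eval \<alpha> y * mono_eval (\<lambda>i. \<beta> i - \<alpha> i) x)"
proof -
  have "mono_eval \<beta> (x + y) = (\<Prod>i\<in>UNIV. \<Sum>k\<in>{..\<beta> i}. real (\<beta> i choose k) * (y$i)^k * (x$i)^(\<beta> i - k))"
    unfolding mono_eval_def by (simp add: add.commute[of "x $ _"] binomial_ring)
  also have "\<dots> = (\<Sum>\<alpha>\<in>Pi\<^sub>E UNIV (\<lambda>i. {..\<beta> i}). \<Prod>i\<in>UNIV. real (\<beta> i choose \<alpha> i) * (y$i)^(\<alpha> i) * (x$i)^(\<beta> i - \<alpha> i))"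
    by (rule prod_sum_PiE) auto
  also have "\<dots> = (\<Sum>\<alpha>\<in>{\<alpha>. \<forall>i. \<alpha> i \<le> \<beta> i}.
      (\<Prod>i\<in>UNIV. real (\<beta> i choose \<alpha> i)) * mono_eval \<alpha> y * mono_eval (\<lambda>i. \<beta> i - \<alpha> i) x)"
    unfolding le_multi_PiE[symmetric] mono_eval_def by (simp add: prod.distrib)
  finally show ?thesis .
qed


lemma moment_imp_preserver:
  fixes K :: "(real^'n::finite) set"
  assumes "moment_seq (sharp K) s" and cl: "closed (sharp K)"
  shows "K_pos_preserver K (Dop s)"
proof -
  obtain M :: "(real^'n) measure" where Mb: "sets M = sets borel"
    and Mn: "emeasure M (space M - sharp K) = 0"
    and Mi: "\<And>\<alpha>. integrable M (mono_eval \<alpha>)" and Ms: "\<And>\<alpha>. s \<alpha> = integral\<^sup>L M (mono_eval \<alpha>)"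
    using assms unfolding moment_seq_def by blast
  have spM: "space M = UNIV" using sets_eq_imp_space_eq[OF Mb] by simp
  have AEK: "AE y in M. y \<in> sharp K"
  proof (rule AE_I')
    have "sharp K \<in> sets M" using cl Mb by simp
    then show "space M - sharp K \<in> null_sets M" using Mn by auto
  qed (auto simp: spM)
  have mono_int: "integrable M (\<lambda>y. mono_eval \<beta> (x + y)) \<and>
     integral\<^sup>L M (\<lambda>y. mono_eval \<beta> (x + y)) = (\<Sum>\<alpha>\<in>{\<alpha>. \<forall>i. \<alpha> i \<le> \<beta> i}.
        s \<alpha> * (\<Prod>i\<in>UNIV. real (\<beta> i choose \<alpha> i)) * mono_eval (\<lambda>i. \<beta> i - \<alpha> i) x)" for \<beta> x
  proof -
    have eq: "(\<lambda>y. mono_eval \<beta> (x + y)) = (\<lambda>y. \<Sum>\<alpha>\<in>{\<alpha>. \<forall>i. \<alpha> i \<le> \<beta> i}.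
      (\<Prod>i\<in>UNIV. real (\<beta> i choose \<alpha> i)) * mono_eval \<alpha> y * mono_eval (\<lambda>i. \<beta> i - \<alpha> i) x)"
      by (rule ext, rule mono_eval_binomial)
    have ii: "integrable M (\<lambda>y. (\<Prod>i\<in>UNIV. real (\<beta> i choose \<alpha> i)) * mono_eval \<alpha> y * mono_eval (\<lambda>i. \<beta> i - \<alpha> i) x)" for \<alpha>
      by (intro integrable_mult_left integrable_mult_right Mi)
    show ?thesis unfolding eq
      apply (intro conjI Bochner_Integration.integrable_sum ii)
      apply (subst Bochner_Integration.integral_sum, rule ii)
      apply (rule sum.cong[OF refl])
      apply (simp add: Ms)
      done
  qed
  show ?thesis unfolding K_pos_preserver_def
  proof (intro allI impI ballI)
    fix c x assume c: "is_mpoly c \<and> (\<forall>x\<in>K. 0 \<le> poly_fun c x)" and xK: "x \<in> K"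
    have "poly_fun (Dop s c) x = (\<Sum>\<beta>\<in>{\<beta>. c \<beta> \<noteq> 0}. c \<beta> * integral\<^sup>L M (\<lambda>y. mono_eval \<beta> (x + y)))"
      using Dop_expand[of c s x] c mono_int by simp
    also have "\<dots> = integral\<^sup>L M (\<lambda>y. poly_fun c (x + y))"
      unfolding poly_fun_def
      by (subst Bochner_Integration.integral_sum) (auto intro!: integrable_mult_right simp: mono_int)
    also have "\<dots> \<ge> 0"
    proof (rule integral_nonneg_AE)
      show "AE y in M. 0 \<le> poly_fun c (x + y)"
        using AEK
      proof (rule AE_mp, intro AE_I2 impI)
        fix y assume "y \<in> sharp K"
        then have "y + x \<in> K" using xK unfolding sharp_def by blast
        then show "0 \<le> poly_fun c (x + y)" using c by (simp add: add.commute)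
      qed
    qed
    finally show "0 \<le> poly_fun (Dop s c) x" .
  qed
qed


lemma sharp_eq:
  fixes K :: "(real^'n::finite) set"
  assumes "convex K" "cone K" "K \<noteq> {}"
  shows "sharp K = K"
proof -
  obtain z where z: "z \<in> K" using assms(3) by blast
  have K0: "0 \<in> K" using assms(2) z unfolding cone_def by (metis scale_zero_left order_refl)
  show ?thesis
  proof
    show "sharp K \<subseteq> K" using K0 unfolding sharp_def by force
  next
    show "K \<subseteq> sharp K"
    proof
      fix x assume x: "x \<in> K"
      have "x + y \<in> K" if y: "y \<in> K" for y
      proof -
        have "(1/2) *\<^sub>R x + (1/2) *\<^sub>R y \<in> K" using assms(1) x y unfolding convex_def by auto
        then have "2 *\<^sub>R ((1/2) *\<^sub>R x + (1/2) *\<^sub>R y) \<in> K" using assms(2) unfolding cone_def by auto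
        then show ?thesis by (simp add: scaleR_add_right)
      qed
      then show "x \<in> sharp K" unfolding sharp_def by blast
    qed
  qed
qed

locale hav =
  fixes K :: "(real^'n::finite) set" and s :: "('n \<Rightarrow> nat) \<Rightarrow> real"
  assumes clK: "closed K" and cvK: "convex K" and cnK: "cone K" and neK: "K \<noteq> {}"
  and pres: "K_pos_preserver K (Dop s)"
begin

lemma zero_in_K: "0 \<in> K"
proof -
  obtain z where z: "z \<in> K" using neK by blast
  show ?thesis using cnK z unfolding cone_def by (metis scale_zero_left order_refl)
qed

definition Lval :: "(('n \<Rightarrow> nat) \<Rightarrow> real) \<Rightarrow> real" where
  "Lval c = (\<Sum>\<beta>\<in>{\<beta>. c \<beta> \<noteq> 0}. c \<beta> * s \<beta>)"

definition G0 :: "((real^'n \<Rightarrow> real) \<times> real) set" where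
  "G0 = {(poly_fun c, Lval c) | c. is_mpoly c}"

lemma Lval_eq:
  assumes "finite S" "{\<beta>. c \<beta> \<noteq> 0} \<subseteq> S"
  shows "Lval c = (\<Sum>\<beta>\<in>S. c \<beta> * s \<beta>)"
  unfolding Lval_def by (rule sum.mono_neutral_left) (use assms in auto)

lemma G0_add:
  assumes "(f,a)\<in>G0" "(g,b)\<in>G0"
  shows "((\<lambda>x. f x + g x), a + b) \<in> G0"
proof -
  obtain c where c: "is_mpoly c" "f = poly_fun c" "a = Lval c" using assms(1) unfolding G0_def by blast
  obtain d where d: "is_mpoly d" "g = poly_fun d" "b = Lval d" using assms(2) unfolding G0_def by blast
  define S where "S = {\<beta>. c \<beta> \<noteq> 0} \<union> {\<beta>. d \<beta> \<noteq> 0}"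
  have fS: "finite S" using c(1) d(1) unfolding S_def is_mpoly_def by simp
  define e where "e = (\<lambda>\<beta>. c \<beta> + d \<beta>)"
  have eS: "{\<beta>. e \<beta> \<noteq> 0} \<subseteq> S" unfolding e_def S_def by auto
  have e: "is_mpoly e" unfolding is_mpoly_def using finite_subset[OF eS fS] .
  have "(\<lambda>x. f x + g x) = poly_fun e"
  proof
    fix x
    show "f x + g x = poly_fun e x"
      unfolding c(2) d(2)
      by (subst (1 2 3) poly_fun_eq[OF fS]) (use eS in \<open>auto simp: S_def e_def sum.distrib algebra_simps\<close>)
  qed
  moreover have "a + b = Lval e"
    unfolding c(3) d(3)
    by (subst (1 2 3) Lval_eq[OF fS]) (use eS in \<open>auto simp: S_def e_def sum.distrib algebra_simps\<close>)
  ultimately show ?thesis using e unfolding G0_def by blast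
qed

lemma G0_smul:
  assumes "(f,a)\<in>G0"
  shows "((\<lambda>x. r * f x), r * a) \<in> G0"
proof -
  obtain c where c: "is_mpoly c" "f = poly_fun c" "a = Lval c" using assms(1) unfolding G0_def by blast
  define S where "S = {\<beta>. c \<beta> \<noteq> 0}"
  have fS: "finite S" using c(1) unfolding S_def is_mpoly_def by simp
  define e where "e = (\<lambda>\<beta>. r * c \<beta>)"
  have eS: "{\<beta>. e \<beta> \<noteq> 0} \<subseteq> S" unfolding e_def S_def by auto
  have e: "is_mpoly e" unfolding is_mpoly_def using finite_subset[OF eS fS] .
  have "(\<lambda>x. r * f x) = poly_fun e"
  proof
    fix x
    show "r * f x = poly_fun e x"
      unfolding c(2)
      by (subst (1 2) poly_fun_eq[OF fS]) (use eS in \<open>auto simp: S_def e_def sum_distrib_left algebra_simps\<close>)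
  qed
  moreover have "r * a = Lval e"
    unfolding c(3)
    by (subst (1 2) Lval_eq[OF fS]) (use eS in \<open>auto simp: S_def e_def sum_distrib_left algebra_simps\<close>)
  ultimately show ?thesis using e unfolding G0_def by blast
qed

lemma Dop_at_zero:
  assumes c: "is_mpoly c"
  shows "poly_fun (Dop s c) 0 = Lval c"
proof -
  have inner: "(\<Sum>\<alpha>\<in>{\<alpha>. \<forall>i. \<alpha> i \<le> \<beta> i}. s \<alpha> * (\<Prod>i\<in>UNIV. real (\<beta> i choose \<alpha> i)) * mono_eval (\<lambda>i. \<beta> i - \<alpha> i) (0::real^'n)) = s \<beta>" for \<beta>
  proof -
    have "(\<Sum>\<alpha>\<in>{\<alpha>. \<forall>i. \<alpha> i \<le> \<beta> i}. s \<alpha> * (\<Prod>i\<in>UNIV. real (\<beta> i choose \<alpha> i)) * mono_eval (\<lambda>i. \<beta> i - \<alpha> i) (0::real^'n))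
       = (\<Sum>\<alpha>\<in>{\<beta>}. s \<alpha> * (\<Prod>i\<in>UNIV. real (\<beta> i choose \<alpha> i)) * mono_eval (\<lambda>i. \<beta> i - \<alpha> i) (0::real^'n))"
    proof (rule sum.mono_neutral_right)
      show "finite {\<alpha>. \<forall>i. \<alpha> i \<le> \<beta> i}" by (rule finite_le_multi)
      show "{\<beta>} \<subseteq> {\<alpha>. \<forall>i. \<alpha> i \<le> \<beta> i}" by auto
      show "\<forall>i\<in>{\<alpha>. \<forall>i. \<alpha> i \<le> \<beta> i} - {\<beta>}. s i * (\<Prod>ia\<in>UNIV. real (\<beta> ia choose i ia)) * mono_eval (\<lambda>ia. \<beta> ia - i ia) (0::real^'n) = 0"
      proof
        fix \<alpha> assume a: "\<alpha> \<in> {\<alpha>. \<forall>i. \<alpha> i \<le> \<beta> i} - {\<beta>}"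
        have "(\<lambda>i. \<beta> i - \<alpha> i) \<noteq> (\<lambda>_. 0)"
        proof
          assume "(\<lambda>i. \<beta> i - \<alpha> i) = (\<lambda>_. 0)"
          then have "\<forall>i. \<beta> i - \<alpha> i = 0" by metis
          then have "\<alpha> = \<beta>" using a by (intro ext) (auto simp: le_antisym)
          then show False using a by simp
        qed
        then show "s \<alpha> * (\<Prod>ia\<in>UNIV. real (\<beta> ia choose \<alpha> ia)) * mono_eval (\<lambda>ia. \<beta> ia - \<alpha> ia) (0::real^'n) = 0"
          by (simp add: mono_eval_zero)
      qed
    qed
    also have "\<dots> = s \<beta>" by (simp add: mono_eval_zero)
    finally show ?thesis .
  qed
  show ?thesis unfolding Dop_expand[OF c] inner Lval_def ..
qed

lemma G0_pos:
  assumes "(f,a)\<in>G0" "\<forall>x\<in>K. 0 \<le> f x"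
  shows "0 \<le> a"
proof -
  obtain c where c: "is_mpoly c" "f = poly_fun c" "a = Lval c" using assms(1) unfolding G0_def by blast
  have "0 \<le> poly_fun (Dop s c) 0"
    using pres c assms(2) zero_in_K unfolding K_pos_preserver_def by blast
  then show ?thesis using Dop_at_zero[OF c(1)] c(3) by simp
qed

lemma G0_sum:
  assumes "finite S"
  shows "((\<lambda>x. \<Sum>\<beta>\<in>S. a \<beta> * mono_eval \<beta> x), (\<Sum>\<beta>\<in>S. a \<beta> * s \<beta>)) \<in> G0"
proof -
  define c where "c = (\<lambda>\<beta>. if \<beta> \<in> S then a \<beta> else 0)"
  have cS: "{\<beta>. c \<beta> \<noteq> 0} \<subseteq> S" unfolding c_def by auto
  have c: "is_mpoly c" unfolding is_mpoly_def using finite_subset[OF cS assms] .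
  have "(\<lambda>x. \<Sum>\<beta>\<in>S. a \<beta> * mono_eval \<beta> x) = poly_fun c"
    by (rule ext, subst poly_fun_eq[OF assms cS]) (simp add: c_def)
  moreover have "(\<Sum>\<beta>\<in>S. a \<beta> * s \<beta>) = Lval c"
    by (subst Lval_eq[OF assms cS]) (simp add: c_def)
  ultimately show ?thesis using c unfolding G0_def by blast
qed

definition E :: "(real^'n \<Rightarrow> real) set" where "E = dom_set K G0"

definition Lam :: "(real^'n \<Rightarrow> real) \<Rightarrow> real" where
  "Lam = (SOME \<Lambda>. (\<forall>f a. (f,a)\<in>G0 \<longrightarrow> \<Lambda> f = a) \<and>
     (\<forall>e\<in>dom_set K G0. \<forall>e'\<in>dom_set K G0. \<Lambda> (\<lambda>x. e x + e' x) = \<Lambda> e + \<Lambda> e') \<and>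
     (\<forall>e\<in>dom_set K G0. \<forall>c. \<Lambda> (\<lambda>x. c * e x) = c * \<Lambda> e) \<and>
     (\<forall>e\<in>dom_set K G0. (\<forall>x\<in>K. 0 \<le> e x) \<longrightarrow> 0 \<le> \<Lambda> e))"

lemma Lam_props:
  "(\<forall>f a. (f,a)\<in>G0 \<longrightarrow> Lam f = a) \<and>
     (\<forall>e\<in>dom_set K G0. \<forall>e'\<in>dom_set K G0. Lam (\<lambda>x. e x + e' x) = Lam e + Lam e') \<and>
     (\<forall>e\<in>dom_set K G0. \<forall>c. Lam (\<lambda>x. c * e x) = c * Lam e) \<and>
     (\<forall>e\<in>dom_set K G0. (\<forall>x\<in>K. 0 \<le> e x) \<longrightarrow> 0 \<le> Lam e)"
proof -
  have ex: "\<exists>\<Lambda>. (\<forall>f a. (f,a)\<in>G0 \<longrightarrow> \<Lambda> f = a) \<and>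
     (\<forall>e\<in>dom_set K G0. \<forall>e'\<in>dom_set K G0. \<Lambda> (\<lambda>x. e x + e' x) = \<Lambda> e + \<Lambda> e') \<and>
     (\<forall>e\<in>dom_set K G0. \<forall>c. \<Lambda> (\<lambda>x. c * e x) = c * \<Lambda> e) \<and>
     (\<forall>e\<in>dom_set K G0. (\<forall>x\<in>K. 0 \<le> e x) \<longrightarrow> 0 \<le> \<Lambda> e)"
    by (rule riesz_extension) (auto intro: G0_add G0_smul G0_pos)
  show ?thesis unfolding Lam_def by (rule someI_ex[OF ex])
qed

lemma Lam_G0: "(f,a)\<in>G0 \<Longrightarrow> Lam f = a"
  using Lam_props by blast
lemma Lam_add: "e \<in> E \<Longrightarrow> e' \<in> E \<Longrightarrow> Lam (\<lambda>x. e x + e' x) = Lam e + Lam e'"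
  using Lam_props unfolding E_def by blast
lemma Lam_smul: "e \<in> E \<Longrightarrow> Lam (\<lambda>x. c * e x) = c * Lam e"
  using Lam_props unfolding E_def by blast
lemma Lam_pos: "e \<in> E \<Longrightarrow> (\<forall>x\<in>K. 0 \<le> e x) \<Longrightarrow> 0 \<le> Lam e"
  using Lam_props unfolding E_def by blast

lemma E_add: "e \<in> E \<Longrightarrow> e' \<in> E \<Longrightarrow> (\<lambda>x. e x + e' x) \<in> E"
  unfolding E_def by (rule dom_set_add) (auto intro: G0_add)
lemma E_smul: "e \<in> E \<Longrightarrow> (\<lambda>x. c * e x) \<in> E"
  unfolding E_def by (rule dom_set_smul) (auto intro: G0_smul)
lemma E_diff: "e \<in> E \<Longrightarrow> e' \<in> E \<Longrightarrow> (\<lambda>x. e x - e' x) \<in> E"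
proof -
  assume "e \<in> E" "e' \<in> E"
  then have "(\<lambda>x. e x + (-1) * e' x) \<in> E" using E_add E_smul by blast
  then show ?thesis by simp
qed
lemma Lam_diff: "e \<in> E \<Longrightarrow> e' \<in> E \<Longrightarrow> Lam (\<lambda>x. e x - e' x) = Lam e - Lam e'"
proof -
  assume a: "e \<in> E" "e' \<in> E"
  have "Lam (\<lambda>x. e x + (-1) * e' x) = Lam e + Lam (\<lambda>x. (-1) * e' x)"
    using Lam_add[OF a(1) E_smul[OF a(2)]] .
  then show ?thesis using Lam_smul[OF a(2), of "-1"] by simp
qed

lemma Lam_mono: "e \<in> E \<Longrightarrow> e' \<in> E \<Longrightarrow> (\<forall>x\<in>K. e x \<le> e' x) \<Longrightarrow> Lam e \<le> Lam e'"
proof -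
  assume a: "e \<in> E" "e' \<in> E" "\<forall>x\<in>K. e x \<le> e' x"
  have "0 \<le> Lam (\<lambda>x. e' x - e x)" by (rule Lam_pos[OF E_diff[OF a(2,1)]]) (use a(3) in auto)
  then show ?thesis using Lam_diff[OF a(2,1)] by simp
qed

lemma G0_E: "(f,a)\<in>G0 \<Longrightarrow> f \<in> E"
  unfolding E_def by (rule dom_setI) auto

lemma E_sum_bound:
  assumes "finite S" "\<forall>x\<in>K. \<bar>e x\<bar> \<le> (\<Sum>\<beta>\<in>S. a \<beta> * mono_eval \<beta> x)"
  shows "e \<in> E"
proof -
  have p: "((\<lambda>x. \<Sum>\<beta>\<in>S. a \<beta> * mono_eval \<beta> x), (\<Sum>\<beta>\<in>S. a \<beta> * s \<beta>)) \<in> G0" by (rule G0_sum[OF assms(1)])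
  have m: "((\<lambda>x. (-1) * (\<Sum>\<beta>\<in>S. a \<beta> * mono_eval \<beta> x)), (-1) * (\<Sum>\<beta>\<in>S. a \<beta> * s \<beta>)) \<in> G0" by (rule G0_smul[OF p])
  show ?thesis unfolding E_def by (rule dom_setI[OF m p]) (use assms(2) in \<open>auto simp: abs_le_iff\<close>)
qed

lemma mono_eval_0: "mono_eval (\<lambda>_. 0) x = 1"
  by (simp add: mono_eval_def)

lemma E_bounded:
  assumes "\<forall>x\<in>K. \<bar>e x\<bar> \<le> B"
  shows "e \<in> E"
  by (rule E_sum_bound[of "{\<lambda>_. 0}" _ "\<lambda>_. B"]) (use assms in \<open>auto simp: mono_eval_0\<close>)

lemma Lam_mono_eval: "Lam (mono_eval \<alpha>) = s \<alpha>"
proof -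
  have "((\<lambda>x. \<Sum>\<beta>\<in>{\<alpha>}. 1 * mono_eval \<beta> x), (\<Sum>\<beta>\<in>{\<alpha>}. 1 * s \<beta>)) \<in> G0" by (rule G0_sum) auto
  then have "(mono_eval \<alpha>, s \<alpha>) \<in> G0" by (simp add: fun_eq_iff)
  then show ?thesis by (rule Lam_G0)
qed

lemma Lam_const: "Lam (\<lambda>_. r) = r * s (\<lambda>_. 0)"
proof -
  have "((\<lambda>x. \<Sum>\<beta>\<in>{\<lambda>_. 0}. r * mono_eval \<beta> x), (\<Sum>\<beta>\<in>{\<lambda>_. 0}. r * s \<beta>)) \<in> G0" by (rule G0_sum) auto
  then have "((\<lambda>_. r), r * s (\<lambda>_. 0)) \<in> G0" by (simp add: mono_eval_0)
  then show ?thesis by (rule Lam_G0)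
qed

lemma s0_nonneg: "0 \<le> s (\<lambda>_. 0)"
proof -
  have "0 \<le> Lam (\<lambda>_. 1)" by (rule Lam_pos) (auto intro: E_bounded[of _ 1])
  then show ?thesis using Lam_const[of 1] by simp
qed

lemma Lam_cong: "e \<in> E \<Longrightarrow> (\<forall>x\<in>K. e x = e' x) \<Longrightarrow> e' \<in> E \<and> Lam e' = Lam e"
proof -
  assume a: "e \<in> E" "\<forall>x\<in>K. e x = e' x"
  have e': "e' \<in> E" using a unfolding E_def dom_set_def by auto
  have "Lam e \<le> Lam e'" by (rule Lam_mono[OF a(1) e']) (use a(2) in auto)
  moreover have "Lam e' \<le> Lam e" by (rule Lam_mono[OF e' a(1)]) (use a(2) in auto)
  ultimately show ?thesis using e' by simp
qed

lemma Lam_sum: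
  assumes "finite I" "\<And>i. i \<in> I \<Longrightarrow> f i \<in> E"
  shows "(\<lambda>x. \<Sum>i\<in>I. f i x) \<in> E \<and> Lam (\<lambda>x. \<Sum>i\<in>I. f i x) = (\<Sum>i\<in>I. Lam (f i))"
  using assms
proof (induction I rule: finite_induct)
  case empty
  have "(\<lambda>x. 0::real) \<in> E" by (rule E_bounded[of _ 0]) auto
  moreover have "Lam (\<lambda>x. 0) = 0" using Lam_const[of 0] by simp
  ultimately show ?case by simp
next
  case (insert i I)
  then have IH: "(\<lambda>x. \<Sum>i\<in>I. f i x) \<in> E" "Lam (\<lambda>x. \<Sum>i\<in>I. f i x) = (\<Sum>i\<in>I. Lam (f i))" by auto
  have fi: "f i \<in> E" using insert by auto
  show ?case using insert(1,2) E_add[OF fi IH(1)] Lam_add[OF fi IH(1)] IH(2) by simp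
qed

end


definition agree :: "nat \<Rightarrow> ('n \<times> nat \<Rightarrow> bool) \<Rightarrow> ('n \<times> nat \<Rightarrow> bool) \<Rightarrow> bool" where
  "agree N \<omega> \<omega>' \<longleftrightarrow> (\<forall>i j. j < N \<longrightarrow> \<omega> (i,j) = \<omega>' (i,j))"

definition cylR :: "('n \<times> nat \<Rightarrow> bool) set set" where
  "cylR = {A. \<exists>N. \<forall>\<omega> \<omega>'. agree N \<omega> \<omega>' \<longrightarrow> (\<omega> \<in> A \<longleftrightarrow> \<omega>' \<in> A)}"

lemma agree_mono: "agree N \<omega> \<omega>' \<Longrightarrow> M \<le> N \<Longrightarrow> agree M \<omega> \<omega>'"
  unfolding agree_def by auto

lemma agree_sym: "agree N \<omega> \<omega>' \<Longrightarrow> agree N \<omega>' \<omega>"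
  unfolding agree_def by auto

lemma agree_trans: "agree N \<omega> \<omega>' \<Longrightarrow> agree N \<omega>' \<omega>'' \<Longrightarrow> agree N \<omega> \<omega>''"
  unfolding agree_def by auto

lemma cylR_mono: "(\<forall>\<omega> \<omega>'. agree N \<omega> \<omega>' \<longrightarrow> (\<omega> \<in> A \<longleftrightarrow> \<omega>' \<in> A)) \<Longrightarrow> N \<le> M \<Longrightarrow>
   (\<forall>\<omega> \<omega>'. agree M \<omega> \<omega>' \<longrightarrow> (\<omega> \<in> A \<longleftrightarrow> \<omega>' \<in> A))"
  using agree_mono by blast

lemma ring_cylR: "ring_of_sets UNIV (cylR :: ('n \<times> nat \<Rightarrow> bool) set set)"
  unfolding ring_of_sets_iff
proof (intro conjI ballI)
  show "cylR \<subseteq> Pow UNIV" by simp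
  show "{} \<in> cylR" unfolding cylR_def by simp
next
  fix a b :: "('n \<times> nat \<Rightarrow> bool) set" assume a: "a \<in> cylR" and b: "b \<in> cylR"
  obtain N where N: "\<forall>\<omega> \<omega>'. agree N \<omega> \<omega>' \<longrightarrow> (\<omega> \<in> a \<longleftrightarrow> \<omega>' \<in> a)" using a unfolding cylR_def by blast
  obtain M where M: "\<forall>\<omega> \<omega>'. agree M \<omega> \<omega>' \<longrightarrow> (\<omega> \<in> b \<longleftrightarrow> \<omega>' \<in> b)" using b unfolding cylR_def by blast
  have N': "\<forall>\<omega> \<omega>'. agree (max N M) \<omega> \<omega>' \<longrightarrow> (\<omega> \<in> a \<longleftrightarrow> \<omega>' \<in> a)" by (rule cylR_mono[OF N]) simp
  have M': "\<forall>\<omega> \<omega>'. agree (max N M) \<omega> \<omega>' \<longrightarrow> (\<omega> \<in> b \<longleftrightarrow> \<omega>' \<in> b)" by (rule cylR_mono[OF M]) simp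
  show "a \<union> b \<in> cylR" unfolding cylR_def using N' M' by blast
  show "a - b \<in> cylR" unfolding cylR_def using N' M' by blast
qed

lemma koenig:
  fixes A :: "nat \<Rightarrow> ('n::finite \<times> nat \<Rightarrow> bool) set"
  assumes cyl: "\<And>k. A k \<in> cylR" and dec: "decseq A" and ne: "\<And>k. A k \<noteq> {}"
  shows "(\<Inter>k. A k) \<noteq> {}"
proof -
  define good where "good N \<omega>0 \<longleftrightarrow> (\<forall>k. \<exists>\<omega>\<in>A k. agree N \<omega> \<omega>0)" for N \<omega>0
  have good0: "good 0 \<omega>0" for \<omega>0 unfolding good_def agree_def using ne by blast
  have step: "\<exists>\<omega>1. agree N \<omega>1 \<omega>0 \<and> good (Suc N) \<omega>1" if g: "good N \<omega>0" for N \<omega>0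
  proof (rule ccontr)
    assume nex: "\<not> ?thesis"
    define w where "w b = (\<lambda>(i,j). if j = N then b i else \<omega>0 (i,j))" for b :: "'n \<Rightarrow> bool"
    have "agree N (w b) \<omega>0" for b unfolding w_def agree_def by auto
    then have "\<not> good (Suc N) (w b)" for b using nex by blast
    then have "\<exists>k. \<not> (\<exists>\<omega>\<in>A k. agree (Suc N) \<omega> (w b))" for b unfolding good_def by blast
    then obtain kb where kb: "\<And>b. \<not> (\<exists>\<omega>\<in>A (kb b). agree (Suc N) \<omega> (w b))" by metis
    define k where "k = Max (range kb)"
    have fin: "finite (range kb)" by simp
    have kle: "kb b \<le> k" for b unfolding k_def using fin by (intro Max_ge) auto
    obtain \<omega> where \<omega>: "\<omega> \<in> A k" "agree N \<omega> \<omega>0" using g unfolding good_def by blast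
    define b where "b i = \<omega> (i,N)" for i
    have "\<omega> \<in> A (kb b)" using \<omega>(1) dec kle[of b] unfolding decseq_def by blast
    moreover have "agree (Suc N) \<omega> (w b)"
      using \<omega>(2) unfolding agree_def w_def b_def by (auto simp: less_Suc_eq)
    ultimately show False using kb by blast
  qed
  define sq where "sq = rec_nat (\<lambda>_. False) (\<lambda>N \<omega>. SOME \<omega>1. agree N \<omega>1 \<omega> \<and> good (Suc N) \<omega>1)"
  have sq0: "sq 0 = (\<lambda>_. False)" unfolding sq_def by simp
  have sqS: "sq (Suc N) = (SOME \<omega>1. agree N \<omega>1 (sq N) \<and> good (Suc N) \<omega>1)" for N unfolding sq_def by simp
  have sq_good: "good N (sq N)" for N
  proof (induction N)
    case 0 show ?case by (rule good0)
  next
    case (Suc N)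
    show ?case unfolding sqS using someI_ex[OF step[OF Suc]] by blast
  qed
  have sq_agree1: "agree N (sq (Suc N)) (sq N)" for N
    unfolding sqS using someI_ex[OF step[OF sq_good]] by blast
  have sq_agree: "agree N (sq M) (sq N)" if "N \<le> M" for N M
    using that
  proof (induction M)
    case 0 then show ?case by (simp add: agree_def)
  next
    case (Suc M)
    show ?case
    proof (cases "N = Suc M")
      case True then show ?thesis by (simp add: agree_def)
    next
      case False
      then have "N \<le> M" using Suc by simp
      then show ?thesis using Suc agree_trans agree_mono[OF sq_agree1] by blast
    qed
  qed
  define \<omega>s where "\<omega>s = (\<lambda>(i,j). sq (Suc j) (i,j))"
  have \<omega>s_agree: "agree N \<omega>s (sq N)" for N
    unfolding agree_def
  proof (intro allI impI)
    fix i j assume "j < N"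
    then have "agree (Suc j) (sq N) (sq (Suc j))" using sq_agree by simp
    then show "\<omega>s (i,j) = sq N (i,j)" unfolding \<omega>s_def agree_def by auto
  qed
  have "\<omega>s \<in> A k" for k
  proof -
    obtain N where N: "\<forall>\<omega> \<omega>'. agree N \<omega> \<omega>' \<longrightarrow> (\<omega> \<in> A k \<longleftrightarrow> \<omega>' \<in> A k)" using cyl[of k] unfolding cylR_def by blast
    obtain \<omega> where "\<omega> \<in> A k" "agree N \<omega> (sq N)" using sq_good[of N] unfolding good_def by blast
    moreover have "agree N (sq N) \<omega>s" using agree_sym[OF \<omega>s_agree] .
    ultimately show ?thesis using N agree_trans by blast
  qed
  then show ?thesis by blast
qed

definition hh :: "real \<Rightarrow> real" where "hh t = (1 + t / (1 + \<bar>t\<bar>)) / 2"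

definition psi :: "real^'n \<Rightarrow> ('n \<times> nat \<Rightarrow> bool)" where
  "psi x = (\<lambda>(i,j). odd \<lfloor>2^(Suc j) * hh (x$i)\<rfloor>)"

context hav
begin

abbreviation cyl :: "('n \<times> nat \<Rightarrow> bool) set set" where "cyl \<equiv> cylR"

definition ind :: "('n \<times> nat \<Rightarrow> bool) set \<Rightarrow> real^'n \<Rightarrow> real" where
  "ind A x = (if psi x \<in> A then 1 else 0)"

lemma ind_E: "ind A \<in> E"
  by (rule E_bounded[of _ 1]) (auto simp: ind_def)

definition fset :: "('n \<times> nat \<Rightarrow> bool) set \<Rightarrow> ennreal" where
  "fset A = ennreal (Lam (ind A))"

lemma Lam_ind_nonneg: "0 \<le> Lam (ind A)"
  by (rule Lam_pos[OF ind_E]) (auto simp: ind_def)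

lemma fset_additive: "additive cyl fset"
  unfolding additive_def
proof (intro ballI impI)
  fix a b :: "('n \<times> nat \<Rightarrow> bool) set" assume "a \<in> cyl" "b \<in> cyl" and d: "a \<inter> b = {}"
  have "ind (a \<union> b) = (\<lambda>x. ind a x + ind b x)" using d by (auto simp: ind_def fun_eq_iff)
  then have "Lam (ind (a \<union> b)) = Lam (ind a) + Lam (ind b)" using Lam_add[OF ind_E ind_E] by simp
  then show "fset (a \<union> b) = fset a + fset b" unfolding fset_def
    using Lam_ind_nonneg by (simp add: ennreal_plus)
qed

lemma fset_positive: "positive cyl fset"
proof -
  have "ind {} = (\<lambda>_. 0)" by (simp add: ind_def fun_eq_iff)
  then have "Lam (ind {}) = 0" using Lam_const[of 0] by simp
  then show ?thesis unfolding positive_def fset_def by simp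
qed

lemma fset_cont:
  assumes "range A \<subseteq> cyl" "decseq A" "(\<Inter>i. A i) = {}"
  shows "(\<lambda>i. fset (A i)) \<longlonglongrightarrow> 0"
proof -
  have "\<exists>k. A k = {}"
  proof (rule ccontr)
    assume "\<not> (\<exists>k. A k = {})"
    then have "(\<Inter>k. A k) \<noteq> {}" using koenig[of A] assms(1,2) by blast
    then show False using assms(3) by simp
  qed
  then obtain k where k: "A k = {}" by blast
  have "\<forall>\<^sub>F i in sequentially. fset (A i) = 0"
  proof (rule eventually_sequentiallyI[of k])
    fix i assume "k \<le> i"
    then have "A i = {}" using assms(2) k unfolding decseq_def by blast
    then show "fset (A i) = 0" using fset_positive unfolding positive_def by simp
  qed
  then show ?thesis by (rule tendsto_eventually)
qed

definition mu0 :: "('n \<times> nat \<Rightarrow> bool) set \<Rightarrow> ennreal" where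
  "mu0 = (SOME \<mu>. (\<forall>A\<in>cyl. \<mu> A = fset A) \<and> measure_space UNIV (sigma_sets UNIV cyl) \<mu>)"

lemma mu0_props: "(\<forall>A\<in>cyl. mu0 A = fset A) \<and> measure_space UNIV (sigma_sets UNIV cyl) mu0"
proof -
  have ex: "\<exists>\<mu>. (\<forall>A\<in>cyl. \<mu> A = fset A) \<and> measure_space UNIV (sigma_sets UNIV cyl) \<mu>"
  proof (rule ring_of_sets.caratheodory_empty_continuous[OF ring_cylR fset_positive fset_additive])
    show "\<And>A. A \<in> cyl \<Longrightarrow> fset A \<noteq> \<infinity>" by (simp add: fset_def)
    show "\<And>A. range A \<subseteq> cyl \<Longrightarrow> decseq A \<Longrightarrow> (\<Inter>i. A i) = {} \<Longrightarrow> (\<lambda>i. fset (A i)) \<longlonglongrightarrow> 0"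
      by (rule fset_cont)
  qed
  show ?thesis unfolding mu0_def by (rule someI_ex[OF ex])
qed

definition rho :: "('n \<times> nat \<Rightarrow> bool) measure" where
  "rho = measure_of UNIV (sigma_sets UNIV cyl) mu0"

lemma sets_rho: "sets rho = sigma_sets UNIV cyl"
  unfolding rho_def by (subst sets_measure_of) (auto simp: sigma_sets_sigma_sets_eq)

lemma space_rho: "space rho = UNIV"
  unfolding rho_def by (simp add: space_measure_of_conv)

lemma cylR_sets: "A \<in> cyl \<Longrightarrow> A \<in> sets rho"
  unfolding sets_rho by (rule sigma_sets.Basic)

lemma emeasure_rho: "A \<in> cyl \<Longrightarrow> emeasure rho A = ennreal (Lam (ind A))"
proof -
  assume A: "A \<in> cyl"
  have ms: "measure_space UNIV (sigma_sets UNIV cyl) mu0" using mu0_props by blast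
  have "emeasure rho A = mu0 A" unfolding rho_def
    using ms A by (intro emeasure_measure_of_sigma) (auto simp: measure_space_def)
  then show ?thesis using mu0_props A unfolding fset_def by simp
qed

lemma UNIV_cylR: "UNIV \<in> cyl" unfolding cylR_def by simp

lemma finite_rho: "finite_measure rho"
proof (rule finite_measureI)
  show "emeasure rho (space rho) \<noteq> \<infinity>" unfolding space_rho using emeasure_rho[OF UNIV_cylR] by simp
qed

lemma measure_rho: "A \<in> cyl \<Longrightarrow> measure rho A = Lam (ind A)"
  unfolding measure_def using emeasure_rho Lam_ind_nonneg by simp

end


definition dep :: "nat \<Rightarrow> (('n \<times> nat \<Rightarrow> bool) \<Rightarrow> 'b) \<Rightarrow> bool" where
  "dep N F \<longleftrightarrow> (\<forall>\<omega> \<omega>'. agree N \<omega> \<omega>' \<longrightarrow> F \<omega> = F \<omega>')"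

definition trunc :: "nat \<Rightarrow> ('n \<times> nat \<Rightarrow> bool) \<Rightarrow> ('n \<times> nat \<Rightarrow> bool)" where
  "trunc N \<omega> = (\<lambda>(i,j). if j < N then \<omega> (i,j) else False)"

lemma agree_trunc: "agree N \<omega> (trunc N \<omega>)"
  unfolding agree_def trunc_def by auto

lemma finite_range_trunc: "finite (range (trunc N :: ('n::finite \<times> nat \<Rightarrow> bool) \<Rightarrow> _))"
proof -
  have "range (trunc N :: ('n \<times> nat \<Rightarrow> bool) \<Rightarrow> _) \<subseteq> (\<lambda>S p. p \<in> S) ` Pow (UNIV \<times> {..<N})"
  proof
    fix w assume "w \<in> range (trunc N :: ('n \<times> nat \<Rightarrow> bool) \<Rightarrow> _)"
    then obtain \<omega> where w: "w = trunc N \<omega>" by blast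
    have "w = (\<lambda>p. p \<in> {p \<in> UNIV \<times> {..<N}. \<omega> p})" unfolding w trunc_def by (auto simp: fun_eq_iff)
    then show "w \<in> (\<lambda>S p. p \<in> S) ` Pow (UNIV \<times> {..<N})" by blast
  qed
  moreover have "finite ((\<lambda>S p. p \<in> S) ` Pow ((UNIV::'n set) \<times> {..<N}))" by simp
  ultimately show ?thesis by (rule finite_subset)
qed

lemma dep_finite_range:
  fixes F :: "('n::finite \<times> nat \<Rightarrow> bool) \<Rightarrow> 'b"
  assumes "dep N F" shows "finite (range F)"
proof -
  have "range F \<subseteq> F ` range (trunc N)"
  proof
    fix y assume "y \<in> range F"
    then obtain \<omega> where "y = F \<omega>" by blast
    moreover have "F \<omega> = F (trunc N \<omega>)" using assms agree_trunc unfolding dep_def by blast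
    ultimately show "y \<in> F ` range (trunc N)" by blast
  qed
  then show ?thesis using finite_range_trunc finite_subset by blast
qed

lemma dep_vimage_cylR: "dep N F \<Longrightarrow> F -` B \<in> cylR"
  unfolding dep_def cylR_def by (intro CollectI exI[of _ N]) auto

definition bitv :: "('n \<times> nat \<Rightarrow> bool) \<Rightarrow> 'n \<Rightarrow> nat \<Rightarrow> real" where
  "bitv \<omega> i j = (if \<omega> (i,j) then 1 else 0)"

definition ThetaN :: "nat \<Rightarrow> ('n \<times> nat \<Rightarrow> bool) \<Rightarrow> real^'n" where
  "ThetaN N \<omega> = (\<chi> i. \<Sum>j<N. bitv \<omega> i j / 2^(Suc j))"

definition Theta :: "('n \<times> nat \<Rightarrow> bool) \<Rightarrow> real^'n" where
  "Theta \<omega> = (\<chi> i. \<Sum>j. bitv \<omega> i j / 2^(Suc j))"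

lemma bitv_bounds: "0 \<le> bitv \<omega> i j" "bitv \<omega> i j \<le> 1"
  unfolding bitv_def by auto

lemma summable_bits: "summable (\<lambda>j. bitv \<omega> i j / 2^(Suc j))"
proof (rule summable_comparison_test[of _ "\<lambda>j. (1/2)^(Suc j)"])
  show "\<exists>N. \<forall>n\<ge>N. norm (bitv \<omega> i n / 2 ^ Suc n) \<le> (1 / 2) ^ Suc n"
    by (auto simp: power_one_over bitv_def)
  show "summable (\<lambda>j. (1/2::real)^(Suc j))" by (subst summable_Suc_iff) (rule summable_geometric, simp)
qed

lemma geo_tail: "(\<Sum>j\<in>{N..<N+k}. 1 / (2::real)^(Suc j)) = 1/2^N - 1/2^(N+k)"
proof (induction k)
  case 0 then show ?case by simp
next
  case (Suc k)
  have "{N..<N + Suc k} = insert (N+k) {N..<N+k}" by auto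
  then have "(\<Sum>j\<in>{N..<N+Suc k}. 1 / (2::real)^(Suc j)) = 1/2^(Suc (N+k)) + (1/2^N - 1/2^(N+k))"
    using Suc by simp
  also have "\<dots> = 1/2^N - 1/2^(N + Suc k)" by (simp add: field_simps)
  finally show ?case .
qed

lemma partial_tail_bound:
  "(\<Sum>j<N+k. bitv \<omega> i j / 2^(Suc j)) \<le> (\<Sum>j<N. bitv \<omega> i j / 2^(Suc j)) + 1/2^N"
proof -
  have "(\<Sum>j<N+k. bitv \<omega> i j / 2^(Suc j)) = (\<Sum>j<N. bitv \<omega> i j / 2^(Suc j)) + (\<Sum>j\<in>{N..<N+k}. bitv \<omega> i j / 2^(Suc j))"
    by (metis atLeast0LessThan le_add1 sum.atLeastLessThan_concat zero_le)
  also have "(\<Sum>j\<in>{N..<N+k}. bitv \<omega> i j / 2^(Suc j)) \<le> (\<Sum>j\<in>{N..<N+k}. 1 / (2::real)^(Suc j))"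
    by (intro sum_mono divide_right_mono bitv_bounds) auto
  also have "\<dots> \<le> 1/2^N" unfolding geo_tail by simp
  finally show ?thesis by simp
qed

lemma Theta_ThetaN:
  shows "ThetaN N \<omega> $ i \<le> Theta \<omega> $ i" and "Theta \<omega> $ i \<le> ThetaN N \<omega> $ i + 1/2^N"
proof -
  let ?f = "\<lambda>j. bitv \<omega> i j / 2^(Suc j)"
  show "ThetaN N \<omega> $ i \<le> Theta \<omega> $ i"
    unfolding ThetaN_def Theta_def vec_lambda_beta
    by (rule sum_le_suminf[OF summable_bits]) (auto simp: bitv_def)
  have "(\<lambda>k. \<Sum>j<k+N. ?f j) \<longlonglongrightarrow> suminf ?f"
    by (rule LIMSEQ_ignore_initial_segment[OF summable_LIMSEQ[OF summable_bits]])
  then have lim: "(\<lambda>k. \<Sum>j<N+k. ?f j) \<longlonglongrightarrow> suminf ?f" by (simp add: add.commute)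
  have "suminf ?f \<le> (\<Sum>j<N. ?f j) + 1/2^N"
    by (rule LIMSEQ_le_const2[OF lim]) (intro exI[of _ 0] allI impI partial_tail_bound)
  then show "Theta \<omega> $ i \<le> ThetaN N \<omega> $ i + 1/2^N"
    unfolding ThetaN_def Theta_def by simp
qed

lemma ThetaN_bounds: "0 \<le> ThetaN N \<omega> $ i" "ThetaN N \<omega> $ i \<le> 1"
proof -
  show "0 \<le> ThetaN N \<omega> $ i" unfolding ThetaN_def by (simp add: sum_nonneg bitv_def)
  have "ThetaN (0+N) \<omega> $ i \<le> ThetaN 0 \<omega> $ i + 1/2^0"
    unfolding ThetaN_def vec_lambda_beta by (rule partial_tail_bound)
  then show "ThetaN N \<omega> $ i \<le> 1" by (simp add: ThetaN_def)
qed

lemma Theta_bounds: "0 \<le> Theta \<omega> $ i" "Theta \<omega> $ i \<le> 1"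
  using Theta_ThetaN[where N=0 and \<omega>=\<omega> and i=i] by (auto simp: ThetaN_def)

lemma ThetaN_lim: "(\<lambda>N. ThetaN N \<omega>) \<longlonglongrightarrow> Theta \<omega>"
  unfolding ThetaN_def Theta_def
  by (rule vec_tendstoI) (simp only: vec_lambda_beta, rule summable_LIMSEQ[OF summable_bits])

lemma dep_ThetaN: "dep N (ThetaN N)"
  unfolding dep_def ThetaN_def agree_def bitv_def by (auto intro!: sum.cong)

lemma floor_double: fixes a :: real shows "\<lfloor>2 * a\<rfloor> = 2 * \<lfloor>a\<rfloor> + (if odd \<lfloor>2 * a\<rfloor> then 1 else (0::int))"
proof -
  have f1: "real_of_int \<lfloor>a\<rfloor> \<le> a" "a < real_of_int \<lfloor>a\<rfloor> + 1" by linarith+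
  have "2 * \<lfloor>a\<rfloor> \<le> \<lfloor>2 * a\<rfloor>" unfolding le_floor_iff using f1 by simp
  moreover have "2 * a < real_of_int (2 * \<lfloor>a\<rfloor> + 2)" using f1 by (simp only: of_int_add of_int_mult of_int_numeral)
  then have "\<lfloor>2 * a\<rfloor> < 2 * \<lfloor>a\<rfloor> + 2" unfolding floor_less_iff .
  ultimately have "\<lfloor>2 * a\<rfloor> = 2 * \<lfloor>a\<rfloor> \<or> \<lfloor>2 * a\<rfloor> = 2 * \<lfloor>a\<rfloor> + 1" by linarith
  then show ?thesis by auto
qed

lemma ThetaN_psi: "ThetaN N (psi x) $ i = \<lfloor>2^N * hh (x$i)\<rfloor> / 2^N"
proof (induction N)
  case 0
  have "0 \<le> hh (x$i)" "hh (x$i) < 1" unfolding hh_def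
    by (auto simp: field_simps abs_if)
  then show ?case by (simp add: ThetaN_def floor_eq_iff)
next
  case (Suc N)
  define a where "a = 2^N * hh (x$i)"
  define b :: int where "b = (if odd \<lfloor>2 * a\<rfloor> then 1 else 0)"
  have e1: "ThetaN (Suc N) (psi x) $ i = ThetaN N (psi x) $ i + bitv (psi x) i N / 2^(Suc N)"
    by (simp add: ThetaN_def)
  have e2: "bitv (psi x) i N = real_of_int b"
    unfolding bitv_def psi_def b_def a_def by (simp add: mult.assoc)
  have e3: "\<lfloor>2^(Suc N) * hh (x$i)\<rfloor> = 2 * \<lfloor>a\<rfloor> + b"
    using floor_double[of a] unfolding b_def a_def by (simp add: mult.assoc)
  have "ThetaN (Suc N) (psi x) $ i = \<lfloor>a\<rfloor> / 2^N + b / 2^(Suc N)"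
    unfolding e1 e2 Suc a_def ..
  also have "\<dots> = (2 * \<lfloor>a\<rfloor> + b) / 2^(Suc N)" by (simp add: field_simps)
  finally show ?case unfolding e3 by simp
qed

lemma ThetaN_psi_close: "0 \<le> hh (x$i) - ThetaN N (psi x) $ i" "hh (x$i) - ThetaN N (psi x) $ i \<le> 1/2^N"
proof -
  let ?y = "hh (x$i)"
  let ?f = "real_of_int \<lfloor>2^N * ?y\<rfloor>"
  have a: "?f \<le> 2^N * ?y" "2^N * ?y < ?f + 1" by linarith+
  have eq: "?y - ?f / 2^N = (2^N * ?y - ?f) / 2^N" by (simp add: field_simps)
  show "0 \<le> hh (x$i) - ThetaN N (psi x) $ i" unfolding ThetaN_psi eq using a by simp
  have "2^N * ?y - ?f \<le> 1" using a by linarith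
  then have "(2^N * ?y - ?f) / 2^N \<le> 1 / 2^N" by (rule divide_right_mono) simp
  then show "hh (x$i) - ThetaN N (psi x) $ i \<le> 1/2^N" unfolding ThetaN_psi eq .
qed

lemma hh_bounds: "0 < hh t" "hh t < 1"
  unfolding hh_def by (auto simp: field_simps abs_if)

definition hi :: "real \<Rightarrow> real" where "hi y = (2*y - 1) / (1 - \<bar>2*y - 1\<bar>)"

lemma hi_hh: "hi (hh t) = t"
proof -
  have p: "0 < 1 + \<bar>t\<bar>" by simp
  have u: "2 * hh t - 1 = t / (1 + \<bar>t\<bar>)" unfolding hh_def using p by (simp add: field_simps)
  have v: "\<bar>t / (1 + \<bar>t\<bar>)\<bar> = \<bar>t\<bar> / (1 + \<bar>t\<bar>)" using p by simp
  have w: "1 - \<bar>t\<bar> / (1 + \<bar>t\<bar>) = 1 / (1 + \<bar>t\<bar>)" using p by (simp add: field_simps)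
  show ?thesis unfolding hi_def u v w using p by simp
qed

definition HH :: "real^'n \<Rightarrow> real^'n" where "HH x = (\<chi> i. hh (x$i))"

lemma continuous_hh: "continuous_on UNIV hh"
  unfolding hh_def by (intro continuous_intros) (auto simp: add_pos_nonneg)


context hav
begin

lemma dep_measurable: "dep N F \<Longrightarrow> F \<in> rho \<rightarrow>\<^sub>M borel"
proof (rule measurableI)
  fix A assume "dep N F"
  then have "F -` A \<in> cyl" by (rule dep_vimage_cylR)
  then show "F -` A \<inter> space rho \<in> sets rho" unfolding space_rho by (simp add: cylR_sets)
qed simp

lemma Theta_measurable: "Theta \<in> borel_measurable rho"
  by (rule borel_measurable_LIMSEQ_metric[where f = ThetaN])
     (auto intro: dep_measurable dep_ThetaN ThetaN_lim)

lemma measure_rho_UNIV: "measure rho UNIV = s (\<lambda>_. 0)"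
proof -
  have "ind UNIV = (\<lambda>_. 1)" by (simp add: ind_def fun_eq_iff)
  then show ?thesis using measure_rho[OF UNIV_cylR] Lam_const[of 1] by simp
qed

lemma simple_int:
  fixes F :: "('n \<times> nat \<Rightarrow> bool) \<Rightarrow> real"
  assumes dF: "dep N F"
  shows "integrable rho F" "integral\<^sup>L rho F = Lam (\<lambda>x. F (psi x))"
proof -
  define V where "V = range F"
  have fV: "finite V" unfolding V_def by (rule dep_finite_range[OF dF])
  have cylv: "F -` {v} \<in> cyl" for v by (rule dep_vimage_cylR[OF dF])
  have Fsum: "F = (\<lambda>\<omega>. \<Sum>v\<in>V. v * indicator (F -` {v}) \<omega>)"
  proof
    fix \<omega>
    have "(\<Sum>v\<in>V. v * indicator (F -` {v}) \<omega>) = (\<Sum>v\<in>V. if v = F \<omega> then v else 0)"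
      by (rule sum.cong) (auto simp: indicator_def)
    also have "\<dots> = F \<omega>" using fV by (simp add: sum.delta V_def)
    finally show "F \<omega> = (\<Sum>v\<in>V. v * indicator (F -` {v}) \<omega>)" by simp
  qed
  have ii: "integrable rho (\<lambda>\<omega>. v * indicator (F -` {v}) \<omega>)" for v
  proof -
    have "integrable rho (indicator (F -` {v}) :: _ \<Rightarrow> real)"
      by (rule integrable_real_indicator) (use cylR_sets[OF cylv] finite_measure.emeasure_finite[OF finite_rho] in \<open>auto simp: top.not_eq_extremum\<close>)
    then show ?thesis by (rule integrable_mult_right)
  qed
  show "integrable rho F" by (subst Fsum) (intro Bochner_Integration.integrable_sum ii)
  have Fpsi: "(\<lambda>x. F (psi x)) = (\<lambda>x. \<Sum>v\<in>V. v * ind (F -` {v}) x)"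
  proof
    fix x
    have "(\<Sum>v\<in>V. v * ind (F -` {v}) x) = (\<Sum>v\<in>V. if v = F (psi x) then v else 0)"
      by (rule sum.cong) (auto simp: ind_def)
    also have "\<dots> = F (psi x)" using fV by (simp add: sum.delta V_def)
    finally show "F (psi x) = (\<Sum>v\<in>V. v * ind (F -` {v}) x)" by simp
  qed
  have "integral\<^sup>L rho F = (\<Sum>v\<in>V. integral\<^sup>L rho (\<lambda>\<omega>. v * indicator (F -` {v}) \<omega>))"
    by (subst Fsum, rule Bochner_Integration.integral_sum, rule ii)
  also have "\<dots> = (\<Sum>v\<in>V. v * measure rho (F -` {v}))"
    by (simp add: space_rho)
  also have "\<dots> = (\<Sum>v\<in>V. Lam (\<lambda>x. v * ind (F -` {v}) x))"
    by (rule sum.cong) (auto simp: measure_rho[OF cylv] Lam_smul[OF ind_E])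
  also have "\<dots> = Lam (\<lambda>x. \<Sum>v\<in>V. v * ind (F -` {v}) x)"
    using Lam_sum[OF fV, of "\<lambda>v x. v * ind (F -` {v}) x"] E_smul[OF ind_E] by simp
  finally show "integral\<^sup>L rho F = Lam (\<lambda>x. F (psi x))" unfolding Fpsi .
qed

definition cube :: "(real^'n) set" where "cube = cbox 0 1"

lemma in_cube: "(\<And>i. 0 \<le> y$i \<and> y$i \<le> 1) \<Longrightarrow> y \<in> cube"
  unfolding cube_def interval_cart by simp

lemma Theta_cube: "Theta \<omega> \<in> cube" by (rule in_cube) (simp add: Theta_bounds)
lemma ThetaN_cube: "ThetaN N \<omega> \<in> cube" by (rule in_cube) (simp add: ThetaN_bounds)
lemma HH_cube: "HH x \<in> cube" by (rule in_cube) (simp add: HH_def hh_bounds less_imp_le)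

lemma dist_le_coords:
  fixes a b :: "real^'n" and r :: real
  assumes "\<And>i. \<bar>a$i - b$i\<bar> \<le> r"
  shows "dist a b \<le> real CARD('n) * r"
proof -
  have "dist a b = norm (a - b)" by (simp add: dist_norm)
  also have "\<dots> \<le> (\<Sum>i\<in>UNIV. \<bar>(a - b)$i\<bar>)" by (rule norm_le_l1_cart)
  also have "\<dots> \<le> (\<Sum>i\<in>(UNIV::'n set). r)" by (rule sum_mono) (use assms in simp)
  finally show ?thesis by simp
qed

lemma KL:
  fixes G :: "real^'n \<Rightarrow> real"
  assumes contG: "continuous_on UNIV G"
  shows "integrable rho (\<lambda>\<omega>. G (Theta \<omega>))"
    and "integral\<^sup>L rho (\<lambda>\<omega>. G (Theta \<omega>)) = Lam (\<lambda>x. G (HH x))"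
proof -
  have cC: "compact cube" unfolding cube_def by simp
  have "bounded (G ` cube)"
    by (rule compact_imp_bounded, rule compact_continuous_image[OF continuous_on_subset[OF contG] cC]) simp
  then obtain B where B: "\<And>y. y \<in> cube \<Longrightarrow> \<bar>G y\<bar> \<le> B" unfolding bounded_iff by auto
  have uc: "uniformly_continuous_on cube G"
    by (rule compact_uniformly_continuous[OF continuous_on_subset[OF contG] cC]) simp
  have Gm: "G \<in> borel_measurable borel" by (rule borel_measurable_continuous_onI[OF contG])
  have GTm: "(\<lambda>\<omega>. G (Theta \<omega>)) \<in> borel_measurable rho" by (rule measurable_compose[OF Theta_measurable Gm])
  show GTi: "integrable rho (\<lambda>\<omega>. G (Theta \<omega>))"
    by (rule finite_measure.integrable_const_bound[OF finite_rho _ GTm, where B=B])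
       (auto intro: B Theta_cube)
  have GH: "(\<lambda>x. G (HH x)) \<in> E" by (rule E_bounded[where B=B]) (auto intro: B HH_cube)
  have s0: "0 \<le> s (\<lambda>_. 0)" by (rule s0_nonneg)
  have main: "\<bar>integral\<^sup>L rho (\<lambda>\<omega>. G (Theta \<omega>)) - Lam (\<lambda>x. G (HH x))\<bar> \<le> 2 * e * s (\<lambda>_. 0)" if e: "0 < e" for e
  proof -
    obtain d where d: "0 < d" and dd: "\<And>y y'. y \<in> cube \<Longrightarrow> y' \<in> cube \<Longrightarrow> dist y' y < d \<Longrightarrow> dist (G y') (G y) < e"
      using uc e unfolding uniformly_continuous_on_def by metis
    have cpos: "0 < real CARD('n)" by simp
    obtain N where N: "(1/2::real)^N < d / CARD('n)"
      using real_arch_pow_inv[of "d / CARD('n)" "1/2"] d cpos by auto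
    have Nd: "CARD('n) * (1/2^N) < d"
      using N cpos by (simp add: power_one_over field_simps)
    define F where "F \<omega> = G (ThetaN N \<omega>)" for \<omega>
    have dF: "dep N F" using dep_ThetaN[of N] unfolding dep_def F_def by metis
    have close1: "\<bar>G (Theta \<omega>) - F \<omega>\<bar> \<le> e" for \<omega>
    proof -
      have "dist (Theta \<omega>) (ThetaN N \<omega>) \<le> CARD('n) * (1/2^N)"
      proof (rule dist_le_coords)
        fix i
        show "\<bar>Theta \<omega> $ i - ThetaN N \<omega> $ i\<bar> \<le> 1/2^N"
          using Theta_ThetaN(1)[where N=N and \<omega>=\<omega> and i=i] Theta_ThetaN(2)[where N=N and \<omega>=\<omega> and i=i] by linarith
      qed
      then have "dist (Theta \<omega>) (ThetaN N \<omega>) < d" using Nd by linarith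
      then have "dist (G (Theta \<omega>)) (G (ThetaN N \<omega>)) < e" by (intro dd ThetaN_cube Theta_cube)
      then show ?thesis unfolding F_def dist_real_def by simp
    qed
    have close2: "\<bar>F (psi x) - G (HH x)\<bar> \<le> e" for x
    proof -
      have "dist (ThetaN N (psi x)) (HH x) \<le> CARD('n) * (1/2^N)"
      proof (rule dist_le_coords)
        fix i
        show "\<bar>ThetaN N (psi x) $ i - HH x $ i\<bar> \<le> 1/2^N"
          using ThetaN_psi_close(1)[where N=N and x=x and i=i] ThetaN_psi_close(2)[where N=N and x=x and i=i]
          unfolding HH_def by simp
      qed
      then have "dist (ThetaN N (psi x)) (HH x) < d" using Nd by linarith
      then have "dist (G (ThetaN N (psi x))) (G (HH x)) < e" by (intro dd ThetaN_cube HH_cube)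
      then show ?thesis unfolding F_def dist_real_def by simp
    qed
    have c1a: "G (Theta \<omega>) \<le> F \<omega> + e" for \<omega> using close1[of \<omega>] by (simp add: abs_le_iff)
    have c1b: "F \<omega> - e \<le> G (Theta \<omega>)" for \<omega> using close1[of \<omega>] by (simp add: abs_le_iff)
    have c2a: "F (psi x) \<le> G (HH x) + e" for x using close2[of x] by (simp add: abs_le_iff)
    have c2b: "G (HH x) - e \<le> F (psi x)" for x using close2[of x] by (simp add: abs_le_iff)
    have Fi: "integrable rho F" and Fint: "integral\<^sup>L rho F = Lam (\<lambda>x. F (psi x))" using simple_int[OF dF] by auto
    have FE: "(\<lambda>x. F (psi x)) \<in> E" by (rule E_bounded[where B=B]) (auto intro: B ThetaN_cube simp: F_def)
    have constE: "(\<lambda>_. e) \<in> E" by (rule E_bounded[where B=e]) (use e in auto)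
    have ci: "integrable rho (\<lambda>_. e)" using finite_measure.integrable_const[OF finite_rho] .
    have int_const: "integral\<^sup>L rho (\<lambda>_. e) = e * s (\<lambda>_. 0)" using measure_rho_UNIV by (simp add: space_rho)
    have i1: "integral\<^sup>L rho (\<lambda>\<omega>. G (Theta \<omega>)) \<le> integral\<^sup>L rho F + e * s (\<lambda>_. 0)"
    proof -
      have "integral\<^sup>L rho (\<lambda>\<omega>. G (Theta \<omega>)) \<le> integral\<^sup>L rho (\<lambda>\<omega>. F \<omega> + e)"
        by (rule integral_mono[OF GTi Bochner_Integration.integrable_add[OF Fi ci]]) (simp add: c1a c1b)
      also have "\<dots> = integral\<^sup>L rho F + e * s (\<lambda>_. 0)" using Fi ci int_const by simp
      finally show ?thesis .
    qed
    have i2: "integral\<^sup>L rho F - e * s (\<lambda>_. 0) \<le> integral\<^sup>L rho (\<lambda>\<omega>. G (Theta \<omega>))"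
    proof -
      have "integral\<^sup>L rho (\<lambda>\<omega>. F \<omega> - e) \<le> integral\<^sup>L rho (\<lambda>\<omega>. G (Theta \<omega>))"
        by (rule integral_mono[OF Bochner_Integration.integrable_diff[OF Fi ci] GTi]) (simp add: c1a c1b)
      moreover have "integral\<^sup>L rho (\<lambda>\<omega>. F \<omega> - e) = integral\<^sup>L rho F - e * s (\<lambda>_. 0)" using Fi ci int_const by simp
      ultimately show ?thesis by simp
    qed
    have l1: "Lam (\<lambda>x. F (psi x)) \<le> Lam (\<lambda>x. G (HH x)) + e * s (\<lambda>_. 0)"
    proof -
      have "Lam (\<lambda>x. F (psi x)) \<le> Lam (\<lambda>x. G (HH x) + e)"
        by (rule Lam_mono[OF FE E_add[OF GH constE]]) (simp add: c2a c2b)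
      also have "\<dots> = Lam (\<lambda>x. G (HH x)) + e * s (\<lambda>_. 0)" using Lam_add[OF GH constE] Lam_const by simp
      finally show ?thesis .
    qed
    have l2: "Lam (\<lambda>x. G (HH x)) - e * s (\<lambda>_. 0) \<le> Lam (\<lambda>x. F (psi x))"
    proof -
      have "Lam (\<lambda>x. G (HH x) - e) \<le> Lam (\<lambda>x. F (psi x))"
        by (rule Lam_mono[OF E_diff[OF GH constE] FE]) (simp add: c2a c2b)
      moreover have "Lam (\<lambda>x. G (HH x) - e) = Lam (\<lambda>x. G (HH x)) - e * s (\<lambda>_. 0)" using Lam_diff[OF GH constE] Lam_const by simp
      ultimately show ?thesis by simp
    qed
    show ?thesis using i1 i2 l1 l2 Fint by (simp add: abs_le_iff)
  qed
  have "\<bar>integral\<^sup>L rho (\<lambda>\<omega>. G (Theta \<omega>)) - Lam (\<lambda>x. G (HH x))\<bar> \<le> 0 + e" if e: "0 < e" for e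
  proof -
    have "0 < e / (2 * s (\<lambda>_. 0) + 1)" using e s0 by simp
    then have "\<bar>integral\<^sup>L rho (\<lambda>\<omega>. G (Theta \<omega>)) - Lam (\<lambda>x. G (HH x))\<bar> \<le> 2 * (e / (2 * s (\<lambda>_. 0) + 1)) * s (\<lambda>_. 0)"
      by (rule main)
    also have "\<dots> \<le> e" using e s0 by (simp add: field_simps)
    finally show ?thesis by simp
  qed
  then have "\<bar>integral\<^sup>L rho (\<lambda>\<omega>. G (Theta \<omega>)) - Lam (\<lambda>x. G (HH x))\<bar> \<le> 0" by (rule field_le_epsilon)
  then show "integral\<^sup>L rho (\<lambda>\<omega>. G (Theta \<omega>)) = Lam (\<lambda>x. G (HH x))" by simp
qed

end


definition dk :: "nat \<Rightarrow> real" where "dk k = 1 / (4 * (real k + 2))"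

lemma dk_pos: "0 < dk k" and dk_small: "dk k \<le> 1/8"
  unfolding dk_def by (auto simp: field_simps)

lemma dk_nz: "dk k \<noteq> 0" using dk_pos[of k] by simp

lemma two_dk: "2 * dk k = 1 / (2 * (real k + 2))" unfolding dk_def by (simp add: field_simps)

lemma inv_less_imp: "0 < (A::real) \<Longrightarrow> 0 < B \<Longrightarrow> 1 / A < 1 / B \<Longrightarrow> B < A"
proof (rule ccontr)
  assume a: "0 < A" "0 < B" "1 / A < 1 / B" "\<not> B < A"
  then have "1 / B \<le> 1 / A" by (intro frac_le) auto
  then show False using a(3) by simp
qed

definition ck :: "nat \<Rightarrow> real \<Rightarrow> real" where
  "ck k t = max 0 (min 1 (min ((t - dk k) / dk k) ((1 - dk k - t) / dk k)))"

lemma ck_bounds: "0 \<le> ck k t" "ck k t \<le> 1"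
  unfolding ck_def by auto

lemma ck_zero: "t \<le> dk k \<or> 1 - dk k \<le> t \<Longrightarrow> ck k t = 0"
proof -
  assume a: "t \<le> dk k \<or> 1 - dk k \<le> t"
  have d: "0 < dk k" by (rule dk_pos)
  have "min ((t - dk k) / dk k) ((1 - dk k - t) / dk k) \<le> 0"
    using a d by (auto simp: divide_nonpos_pos min_le_iff_disj)
  then show ?thesis unfolding ck_def by simp
qed

lemma ck_one: "2 * dk k \<le> t \<Longrightarrow> t \<le> 1 - 2 * dk k \<Longrightarrow> ck k t = 1"
proof -
  assume a: "2 * dk k \<le> t" "t \<le> 1 - 2 * dk k"
  have d: "0 < dk k" by (rule dk_pos)
  have "1 \<le> (t - dk k) / dk k" using a d by (simp add: field_simps)
  moreover have "1 \<le> (1 - dk k - t) / dk k" using a d by (simp add: field_simps)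
  ultimately show ?thesis unfolding ck_def by simp
qed

lemma ck_cont: "continuous_on UNIV (ck k)"
  unfolding ck_def by (intro continuous_intros) (auto simp: dk_nz)

definition chi :: "nat \<Rightarrow> real^'n \<Rightarrow> real" where
  "chi k y = (\<Prod>i\<in>UNIV. ck k (y$i))"

lemma chi_bounds: "0 \<le> chi k y" "chi k y \<le> 1"
  unfolding chi_def by (auto intro: prod_nonneg prod_le_1 ck_bounds)

lemma chi_cont: "continuous_on UNIV (chi k)"
  unfolding chi_def ck_def by (intro continuous_intros) (auto simp: dk_nz)

lemma hh_neg: "t < 0 \<Longrightarrow> hh t = 1 / (2 * (1 - t))"
  unfolding hh_def by (simp add: field_simps)

lemma hh_pos: "0 \<le> t \<Longrightarrow> hh t = 1 - 1 / (2 * (1 + t))"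
  unfolding hh_def by (simp add: field_simps)

lemma hh_small: "hh t < 2 * dk k \<Longrightarrow> real k + 1 < \<bar>t\<bar>"
proof -
  assume a: "hh t < 2 * dk k"
  have d: "2 * dk k \<le> 1/4" using dk_small[of k] by simp
  show ?thesis
  proof (cases "t < 0")
    case True
    have "1 / (2 * (1 - t)) < 1 / (2 * (real k + 2))" using a hh_neg[OF True] unfolding two_dk by simp
    then have "2 * (real k + 2) < 2 * (1 - t)"
      by (rule inv_less_imp[rotated 2]) (use True in auto)
    then show ?thesis using True by simp
  next
    case False
    then have "1 / (2 * (1 + t)) \<le> 1 / 2" by (intro frac_le) auto
    then have "1/2 \<le> hh t" using hh_pos[of t] False by simp
    then show ?thesis using a d by simp
  qed
qed

lemma hh_large: "1 - 2 * dk k < hh t \<Longrightarrow> real k + 1 < \<bar>t\<bar>"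
proof -
  assume a: "1 - 2 * dk k < hh t"
  have d: "2 * dk k \<le> 1/4" using dk_small[of k] by simp
  show ?thesis
  proof (cases "t < 0")
    case True
    then have "1 / (2 * (1 - t)) \<le> 1 / 2" by (intro frac_le) auto
    then have "hh t \<le> 1/2" using hh_neg[of t] True by simp
    then show ?thesis using a d by simp
  next
    case False
    have "1 / (2 * (1 + t)) < 1 / (2 * (real k + 2))" using a hh_pos[of t] False unfolding two_dk by simp
    then have "2 * (real k + 2) < 2 * (1 + t)"
      by (rule inv_less_imp[rotated 2]) (use False in auto)
    then show ?thesis using False by simp
  qed
qed

definition sqn :: "real^'n \<Rightarrow> real" where "sqn x = (\<Sum>i\<in>UNIV. (x$i)^2)"

lemma sqn_nonneg: "0 \<le> sqn x" unfolding sqn_def by (simp add: sum_nonneg)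

lemma tail_chi: "1 - chi k (HH x) \<le> sqn x / (real k + 1)^2"
proof (cases "\<forall>i. ck k (hh (x$i)) = 1")
  case True
  then have "chi k (HH x) = 1" unfolding chi_def HH_def by simp
  then show ?thesis using sqn_nonneg[of x] by simp
next
  case False
  then obtain i where i: "ck k (hh (x$i)) \<noteq> 1" by blast
  then have "hh (x$i) < 2 * dk k \<or> 1 - 2 * dk k < hh (x$i)" by (metis ck_one not_le)
  then have "real k + 1 < \<bar>x$i\<bar>" using hh_small hh_large by blast
  then have "(real k + 1)^2 \<le> \<bar>x$i\<bar>^2" by (intro power_mono) auto
  then have "(real k + 1)^2 \<le> (x$i)^2" by simp
  also have "\<dots> \<le> sqn x" unfolding sqn_def by (rule member_le_sum) auto
  finally have "1 \<le> sqn x / (real k + 1)^2" by simp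
  then show ?thesis using chi_bounds[of k "HH x"] by linarith
qed

definition Zs :: "('n::finite \<times> nat \<Rightarrow> bool) set" where
  "Zs = {\<omega>. \<forall>i. 0 < Theta \<omega> $ i \<and> Theta \<omega> $ i < 1}"

lemma chi_Theta_out: "\<omega> \<notin> Zs \<Longrightarrow> chi k (Theta \<omega>) = 0"
proof -
  assume "\<omega> \<notin> Zs"
  then obtain i where "\<not> (0 < Theta \<omega> $ i \<and> Theta \<omega> $ i < 1)" unfolding Zs_def by blast
  then have "Theta \<omega> $ i \<le> dk k \<or> 1 - dk k \<le> Theta \<omega> $ i" using Theta_bounds[of \<omega> i] dk_pos[of k] by auto
  then have "ck k (Theta \<omega> $ i) = 0" by (rule ck_zero)
  then show ?thesis unfolding chi_def by (intro prod_zero) auto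
qed

lemma dk_lim: "(\<lambda>k. 2 * dk k) \<longlonglongrightarrow> 0"
  unfolding dk_def by real_asymp

lemma chi_Theta_in: "\<omega> \<in> Zs \<Longrightarrow> eventually (\<lambda>k. chi k (Theta \<omega>) = 1) sequentially"
proof -
  assume z: "\<omega> \<in> Zs"
  have "eventually (\<lambda>k. ck k (Theta \<omega> $ i) = 1) sequentially" for i
  proof -
    have a: "0 < Theta \<omega> $ i" "0 < 1 - Theta \<omega> $ i" using z unfolding Zs_def by auto
    have "eventually (\<lambda>k. 2 * dk k < Theta \<omega> $ i) sequentially" by (rule order_tendstoD(2)[OF dk_lim a(1)])
    moreover have "eventually (\<lambda>k. 2 * dk k < 1 - Theta \<omega> $ i) sequentially" by (rule order_tendstoD(2)[OF dk_lim a(2)])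
    ultimately show ?thesis by eventually_elim (auto intro: ck_one)
  qed
  then have "eventually (\<lambda>k. \<forall>i. ck k (Theta \<omega> $ i) = 1) sequentially" by (rule eventually_all_finite)
  then show ?thesis by eventually_elim (simp add: chi_def)
qed

definition Hinv :: "real^'n \<Rightarrow> real^'n" where "Hinv y = (\<chi> i. hi (y$i))"
definition Phi :: "('n \<times> nat \<Rightarrow> bool) \<Rightarrow> real^'n" where "Phi \<omega> = Hinv (Theta \<omega>)"

lemma Hinv_HH: "Hinv (HH x) = x"
  unfolding Hinv_def HH_def by (simp add: hi_hh vec_eq_iff)

definition clampk :: "nat \<Rightarrow> real \<Rightarrow> real" where
  "clampk k t = max (dk k / 2) (min (1 - dk k / 2) t)"

lemma hi_clamp_cont: "continuous_on UNIV (\<lambda>t. hi (clampk k t))"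
proof -
  have d: "0 < dk k" "dk k \<le> 1/8" by (rule dk_pos, rule dk_small)
  have "1 - \<bar>2 * clampk k t - 1\<bar> \<noteq> 0" for t
  proof -
    have "dk k / 2 \<le> clampk k t" "clampk k t \<le> 1 - dk k / 2" unfolding clampk_def using d by auto
    then have "\<bar>2 * clampk k t - 1\<bar> \<le> 1 - dk k" by (simp add: abs_le_iff)
    then show ?thesis using d by simp
  qed
  then show ?thesis unfolding hi_def clampk_def
    by (intro continuous_intros) auto
qed

definition Gk :: "(real^'n \<Rightarrow> real) \<Rightarrow> nat \<Rightarrow> real^'n \<Rightarrow> real" where
  "Gk g k y = chi k y * g (\<chi> i. hi (clampk k (y$i)))"

lemma Gk_cont:
  fixes g :: "real^'n::finite \<Rightarrow> real"
  assumes g: "continuous_on UNIV g"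
  shows "continuous_on UNIV (Gk g k)"
proof -
  have c0: "continuous_on UNIV (\<lambda>y::real^'n. hi (clampk k (y$i)))" for i
    by (rule continuous_on_compose2[OF hi_clamp_cont]) (auto intro!: continuous_intros)
  have c1: "continuous_on UNIV (\<lambda>y::real^'n. \<chi> i. hi (clampk k (y$i)))"
    by (rule continuous_on_vec_lambda) (rule c0)
  have c2: "continuous_on UNIV (\<lambda>y::real^'n. g (\<chi> i. hi (clampk k (y$i))))"
    by (rule continuous_on_compose2[OF g c1]) simp
  show ?thesis unfolding Gk_def by (rule continuous_on_mult[OF chi_cont c2])
qed

lemma Gk_eq: "Gk g k y = chi k y * g (Hinv y)"
proof (cases "chi k y = 0")
  case True then show ?thesis unfolding Gk_def by simp
next
  case False
  have "ck k (y$i) \<noteq> 0" for i using False unfolding chi_def by auto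
  then have "dk k < y$i \<and> y$i < 1 - dk k" for i by (metis ck_zero not_le)
  then have b: "dk k < y$i \<and> y$i < 1 - dk k" for i by blast
  have "clampk k (y$i) = y$i" for i unfolding clampk_def using b[of i] dk_pos[of k] by (simp add: max_def min_def)
  then have "(\<chi> i. hi (clampk k (y$i))) = Hinv y" unfolding Hinv_def by simp
  then show ?thesis unfolding Gk_def by simp
qed


context hav
begin

lemma mono_G0: "(mono_eval \<beta>, s \<beta>) \<in> G0"
proof -
  have "((\<lambda>x. \<Sum>b\<in>{\<beta>}. 1 * mono_eval b x), (\<Sum>b\<in>{\<beta>}. 1 * s b)) \<in> G0" by (rule G0_sum) auto
  then show ?thesis by (simp add: fun_eq_iff)
qed

lemma mono_E: "mono_eval \<beta> \<in> E" by (rule G0_E[OF mono_G0])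

lemma E_abs_bound:
  assumes "e' \<in> E" "\<forall>x\<in>K. \<bar>e x\<bar> \<le> e' x"
  shows "e \<in> E"
proof -
  obtain f a g b where fg: "(f,a)\<in>G0" "(g,b)\<in>G0" "\<forall>x\<in>K. f x \<le> e' x \<and> e' x \<le> g x"
    using assms(1) unfolding E_def dom_set_def by blast
  have m: "((\<lambda>x. (-1) * g x), (-1) * b) \<in> G0" by (rule G0_smul[OF fg(2)])
  have b1: "(-1) * g x \<le> e x" if "x \<in> K" for x
    using assms(2)[rule_format, OF that] fg(3)[rule_format, OF that] by (simp add: abs_le_iff)
  have b2: "e x \<le> g x" if "x \<in> K" for x
    using assms(2)[rule_format, OF that] fg(3)[rule_format, OF that] by (simp add: abs_le_iff)
  show ?thesis unfolding E_def by (rule dom_setI[OF m fg(2)]) (use b1 b2 in auto)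
qed

definition ei :: "'n \<Rightarrow> 'n \<Rightarrow> nat" where "ei i = (\<lambda>j. if j = i then 2 else 0)"

lemma mono_ei: "mono_eval (ei i) x = (x$i)^2"
proof -
  have "mono_eval (ei i) x = (\<Prod>j\<in>UNIV. if j = i then (x$j)^2 else 1)"
    unfolding mono_eval_def ei_def by (rule prod.cong) auto
  also have "\<dots> = (x$i)^2" by (subst prod.delta) auto
  finally show ?thesis .
qed

lemma sqn_E: "sqn \<in> E"
proof -
  have h: "(\<lambda>x. \<Sum>i\<in>UNIV. mono_eval (ei i) x) \<in> E \<and> Lam (\<lambda>x. \<Sum>i\<in>UNIV. mono_eval (ei i) x) = (\<Sum>i\<in>UNIV. Lam (mono_eval (ei i)))"
    by (rule Lam_sum) (simp_all add: mono_E)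
  have "(\<lambda>x. \<Sum>i\<in>UNIV. mono_eval (ei i) x) \<in> E" using h by blast
  moreover have "(\<lambda>x. \<Sum>i\<in>UNIV. mono_eval (ei i) x) = sqn" by (simp add: fun_eq_iff sqn_def mono_ei)
  ultimately show ?thesis by simp
qed

lemma Lam_tail:
  assumes gE: "g \<in> E" and gb: "\<And>x. \<bar>g x\<bar> \<le> B"
  shows "(\<lambda>k. Lam (\<lambda>x. chi k (HH x) * g x)) \<longlonglongrightarrow> Lam g"
proof -
  have B0: "0 \<le> B" using gb[of 0] by linarith
  have cgE: "(\<lambda>x. chi k (HH x) * g x) \<in> E" for k
  proof (rule E_bounded[where B=B], intro ballI)
    fix x
    have "\<bar>chi k (HH x) * g x\<bar> \<le> 1 * B"
      unfolding abs_mult using chi_bounds[of k "HH x"] gb[of x] by (intro mult_mono) auto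
    then show "\<bar>chi k (HH x) * g x\<bar> \<le> B" by simp
  qed
  define c where "c k = B / (real k + 1)^2" for k
  have bnd: "norm (Lam (\<lambda>x. chi k (HH x) * g x) - Lam g) \<le> c k * Lam sqn" for k
  proof -
    have dE: "(\<lambda>x. chi k (HH x) * g x - g x) \<in> E" by (rule E_diff[OF cgE gE])
    have sE: "(\<lambda>x. c k * sqn x) \<in> E" by (rule E_smul[OF sqn_E])
    have msE: "(\<lambda>x. - (c k * sqn x)) \<in> E" using E_smul[OF sqn_E, of "- c k"] by simp
    have pw: "\<bar>chi k (HH x) * g x - g x\<bar> \<le> c k * sqn x" for x
    proof -
      have e1: "chi k (HH x) * g x - g x = - ((1 - chi k (HH x)) * g x)" by (simp add: algebra_simps)
      have "\<bar>chi k (HH x) * g x - g x\<bar> = (1 - chi k (HH x)) * \<bar>g x\<bar>"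
        unfolding e1 abs_minus_cancel abs_mult using chi_bounds[of k "HH x"] by simp
      also have "\<dots> \<le> (sqn x / (real k + 1)^2) * B"
        by (rule mult_mono[OF tail_chi gb]) (use chi_bounds[of k "HH x"] sqn_nonneg[of x] in auto)
      also have "\<dots> = c k * sqn x" unfolding c_def by simp
      finally show ?thesis .
    qed
    have pw1: "chi k (HH x) * g x - g x \<le> c k * sqn x" for x using pw[of x] by (simp add: abs_le_iff)
    have pw2: "- (c k * sqn x) \<le> chi k (HH x) * g x - g x" for x using pw[of x] by (simp add: abs_le_iff)
    have "Lam (\<lambda>x. chi k (HH x) * g x - g x) \<le> Lam (\<lambda>x. c k * sqn x)"
      by (rule Lam_mono[OF dE sE]) (simp add: pw1)
    moreover have "Lam (\<lambda>x. - (c k * sqn x)) \<le> Lam (\<lambda>x. chi k (HH x) * g x - g x)"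
      by (rule Lam_mono[OF msE dE]) (simp add: pw2)
    moreover have "Lam (\<lambda>x. - (c k * sqn x)) = - (c k * Lam sqn)" using Lam_smul[OF sqn_E, of "- c k"] by simp
    moreover have "Lam (\<lambda>x. c k * sqn x) = c k * Lam sqn" using Lam_smul[OF sqn_E] by simp
    moreover have "Lam (\<lambda>x. chi k (HH x) * g x - g x) = Lam (\<lambda>x. chi k (HH x) * g x) - Lam g"
      by (rule Lam_diff[OF cgE gE])
    ultimately show ?thesis by (simp add: abs_le_iff)
  qed
  have "(\<lambda>k::nat. 1 / (real k + 1)^2) \<longlonglongrightarrow> 0" by real_asymp
  then have "(\<lambda>k. (B * Lam sqn) * (1 / (real k + 1)^2)) \<longlonglongrightarrow> 0" by (rule tendsto_mult_right_zero)
  then have c0: "(\<lambda>k. c k * Lam sqn) \<longlonglongrightarrow> 0" unfolding c_def by simp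
  have "(\<lambda>k. Lam (\<lambda>x. chi k (HH x) * g x) - Lam g) \<longlonglongrightarrow> 0"
    by (rule Lim_null_comparison[OF _ c0]) (use bnd in simp)
  then have "(\<lambda>k. (Lam (\<lambda>x. chi k (HH x) * g x) - Lam g) + Lam g) \<longlonglongrightarrow> 0 + Lam g"
    by (intro tendsto_add tendsto_const)
  then show ?thesis by simp
qed

lemma GL:
  fixes g :: "real^'n \<Rightarrow> real"
  assumes gc: "continuous_on UNIV g" and gb: "\<And>x. \<bar>g x\<bar> \<le> B"
  shows "integrable rho (\<lambda>\<omega>. indicator Zs \<omega> * g (Phi \<omega>))"
    and "integral\<^sup>L rho (\<lambda>\<omega>. indicator Zs \<omega> * g (Phi \<omega>)) = Lam g"
proof -
  have B0: "0 \<le> B" using gb[of 0] by linarith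
  define f where "f k \<omega> = Gk g k (Theta \<omega>)" for k \<omega>
  have f_eq: "f k \<omega> = chi k (Theta \<omega>) * g (Phi \<omega>)" for k \<omega> unfolding f_def Phi_def Gk_eq ..
  have fi: "integrable rho (f k)" for k unfolding f_def by (rule KL(1)[OF Gk_cont[OF gc]])
  have fint: "integral\<^sup>L rho (f k) = Lam (\<lambda>x. chi k (HH x) * g x)" for k
  proof -
    have "integral\<^sup>L rho (f k) = Lam (\<lambda>x. Gk g k (HH x))" unfolding f_def by (rule KL(2)[OF Gk_cont[OF gc]])
    also have "\<dots> = Lam (\<lambda>x. chi k (HH x) * g x)" by (simp add: Gk_eq Hinv_HH)
    finally show ?thesis .
  qed
  have flim: "(\<lambda>k. f k \<omega>) \<longlonglongrightarrow> indicator Zs \<omega> * g (Phi \<omega>)" for \<omega>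
  proof (cases "\<omega> \<in> Zs")
    case True
    have "eventually (\<lambda>k. f k \<omega> = indicator Zs \<omega> * g (Phi \<omega>)) sequentially"
      using chi_Theta_in[OF True] by eventually_elim (simp add: f_eq True)
    then show ?thesis by (rule tendsto_eventually)
  next
    case False
    then show ?thesis by (simp add: f_eq chi_Theta_out)
  qed
  have fm: "f k \<in> borel_measurable rho" for k by (rule borel_measurable_integrable[OF fi])
  have lm: "(\<lambda>\<omega>. indicator Zs \<omega> * g (Phi \<omega>)) \<in> borel_measurable rho"
    by (rule borel_measurable_LIMSEQ_real[OF flim fm])
  have fb: "norm (f k \<omega>) \<le> B" for k \<omega>
  proof -
    have "\<bar>chi k (Theta \<omega>) * g (Phi \<omega>)\<bar> \<le> 1 * B"
      unfolding abs_mult using chi_bounds[of k "Theta \<omega>"] gb[of "Phi \<omega>"] by (intro mult_mono) auto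
    then show ?thesis by (simp add: f_eq)
  qed
  show li: "integrable rho (\<lambda>\<omega>. indicator Zs \<omega> * g (Phi \<omega>))"
    by (rule finite_measure.integrable_const_bound[OF finite_rho _ lm, where B=B])
       (auto simp: indicator_def gb B0)
  have c1: "(\<lambda>k. integral\<^sup>L rho (f k)) \<longlonglongrightarrow> integral\<^sup>L rho (\<lambda>\<omega>. indicator Zs \<omega> * g (Phi \<omega>))"
    by (rule integral_dominated_convergence[OF lm fm, where w="\<lambda>_. B"])
       (use fb in \<open>auto simp: flim finite_measure.integrable_const[OF finite_rho]\<close>)
  have gE: "g \<in> E" by (rule E_bounded[where B=B]) (simp add: gb)
  have c2: "(\<lambda>k. integral\<^sup>L rho (f k)) \<longlonglongrightarrow> Lam g" unfolding fint by (rule Lam_tail[OF gE gb])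
  show "integral\<^sup>L rho (\<lambda>\<omega>. indicator Zs \<omega> * g (Phi \<omega>)) = Lam g" by (rule LIMSEQ_unique[OF c1 c2])
qed

end


definition tau :: "nat \<Rightarrow> real^'n \<Rightarrow> real" where
  "tau R x = (\<Prod>i\<in>UNIV. max 0 (min 1 (real R + 2 - \<bar>x$i\<bar>)))"

lemma tau_bounds: "0 \<le> tau R x" "tau R x \<le> 1"
  unfolding tau_def by (auto intro: prod_nonneg prod_le_1)

lemma tau_cont: "continuous_on UNIV (tau R)"
  unfolding tau_def by (intro continuous_intros)

lemma tau_mono: "R \<le> R' \<Longrightarrow> tau R x \<le> tau R' x"
  unfolding tau_def by (intro prod_mono) auto

lemma tau_one: "(\<And>i. \<bar>x$i\<bar> \<le> real R + 1) \<Longrightarrow> tau R x = 1"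
proof -
  assume a: "\<And>i. \<bar>x$i\<bar> \<le> real R + 1"
  show ?thesis unfolding tau_def
  proof (intro prod.neutral ballI)
    fix i show "max 0 (min 1 (real R + 2 - \<bar>x$i\<bar>)) = 1" using a[of i] by simp
  qed
qed

lemma tau_eventually: "eventually (\<lambda>R. tau R x = 1) sequentially"
proof -
  have "eventually (\<lambda>R. \<bar>x$i\<bar> \<le> real R + 1) sequentially" for i
  proof -
    obtain n where "\<bar>x$i\<bar> \<le> real n" using real_arch_simple by blast
    then show ?thesis by (intro eventually_sequentiallyI[of n]) auto
  qed
  then have "eventually (\<lambda>R. \<forall>i. \<bar>x$i\<bar> \<le> real R + 1) sequentially" by (rule eventually_all_finite)
  then show ?thesis by eventually_elim (simp add: tau_one)
qed

lemma tail_tau: "1 - tau R x \<le> sqn x / (real R + 1)^2"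
proof (cases "\<forall>i. \<bar>x$i\<bar> \<le> real R + 1")
  case True
  then have "tau R x = 1" using tau_one by blast
  then show ?thesis using sqn_nonneg[of x] by simp
next
  case False
  then obtain i where i: "real R + 1 < \<bar>x$i\<bar>" by (auto simp: not_le)
  then have "(real R + 1)^2 \<le> \<bar>x$i\<bar>^2" by (intro power_mono) auto
  then have "(real R + 1)^2 \<le> (x$i)^2" by simp
  also have "\<dots> \<le> sqn x" unfolding sqn_def by (rule member_le_sum) auto
  finally have "1 \<le> sqn x / (real R + 1)^2" by simp
  then show ?thesis using tau_bounds[of R x] by linarith
qed

lemma mono_tau_bound: "\<bar>mono_eval \<alpha> x\<bar> * tau R x \<le> (\<Prod>i\<in>UNIV. (real R + 2) ^ \<alpha> i)"
proof (cases "tau R x = 0")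
  case True then show ?thesis by (simp add: prod_nonneg)
next
  case False
  then have "max 0 (min 1 (real R + 2 - \<bar>x$i\<bar>)) \<noteq> 0" for i unfolding tau_def by auto
  then have b: "\<bar>x$i\<bar> \<le> real R + 2" for i
  proof -
    have nz: "max 0 (min 1 (real R + 2 - \<bar>x$i\<bar>)) \<noteq> 0" using \<open>\<And>i. max 0 (min 1 (real R + 2 - \<bar>x$i\<bar>)) \<noteq> 0\<close> .
    show ?thesis
    proof (rule ccontr)
      assume "\<not> \<bar>x$i\<bar> \<le> real R + 2"
      then have "max 0 (min 1 (real R + 2 - \<bar>x$i\<bar>)) = 0" by simp
      then show False using nz by simp
    qed
  qed
  have "\<bar>mono_eval \<alpha> x\<bar> = (\<Prod>i\<in>UNIV. \<bar>x$i\<bar> ^ \<alpha> i)" unfolding mono_eval_def by (simp add: abs_prod power_abs)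
  also have "\<dots> \<le> (\<Prod>i\<in>UNIV. (real R + 2) ^ \<alpha> i)" by (intro prod_mono conjI power_mono b) auto
  finally show ?thesis using tau_bounds[of R x] by (smt (verit) mult_left_le mult_nonneg_nonneg abs_ge_zero)
qed

lemma continuous_mono_eval: "continuous_on UNIV (mono_eval \<alpha> :: real^'n::finite \<Rightarrow> real)"
  unfolding mono_eval_def by (intro continuous_intros)

lemma Hinv_measurable: "(Hinv :: real^'n::finite \<Rightarrow> real^'n) \<in> borel_measurable borel"
proof (subst borel_measurable_euclidean_space, intro ballI)
  fix b :: "real^'n" assume "b \<in> Basis"
  then obtain i where b: "b = axis i 1" unfolding Basis_vec_def by auto
  have hm: "hi \<in> borel_measurable borel" unfolding hi_def by measurable
  have cm: "(\<lambda>y::real^'n. y$i) \<in> borel_measurable borel"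
    by (rule borel_measurable_continuous_onI) (intro continuous_intros)
  have "(\<lambda>y::real^'n. hi (y$i)) \<in> borel_measurable borel" by (rule measurable_compose[OF cm hm])
  then show "(\<lambda>y. Hinv y \<bullet> b) \<in> borel_measurable borel"
    unfolding b Hinv_def by (simp add: inner_axis)
qed

context hav
begin

lemma Phi_measurable: "Phi \<in> borel_measurable rho"
  unfolding Phi_def[abs_def] by (rule measurable_compose[OF Theta_measurable Hinv_measurable])

lemma Zs_sets: "Zs \<in> sets rho"
proof -
  have "Theta -` box 0 1 \<inter> space rho \<in> sets rho" by (rule measurable_sets[OF Theta_measurable]) simp
  moreover have "Theta -` box 0 1 \<inter> space rho = Zs" unfolding Zs_def space_rho interval_cart by auto
  ultimately show ?thesis by simp
qed

lemma AE_Zs: "AE \<omega> in rho. \<omega> \<in> Zs"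
proof -
  have "integral\<^sup>L rho (\<lambda>\<omega>. indicator Zs \<omega> * (\<lambda>_. 1::real) (Phi \<omega>)) = Lam (\<lambda>_. 1)"
    by (rule GL(2)[where B=1]) auto
  then have "measure rho Zs = s (\<lambda>_. 0)" using Lam_const[of 1] by (simp add: space_rho)
  then have "measure rho (space rho - Zs) = 0"
    using finite_measure.finite_measure_compl[OF finite_rho Zs_sets] measure_rho_UNIV by (simp add: space_rho)
  then have "emeasure rho (space rho - Zs) = 0"
    using finite_measure.emeasure_eq_measure[OF finite_rho] by simp
  moreover have "space rho - Zs \<in> sets rho" using Zs_sets by auto
  ultimately show ?thesis by (subst AE_iff_measurable[where N="space rho - Zs"]) auto
qed

lemma AE_K: "AE \<omega> in rho. Phi \<omega> \<in> K"
proof -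
  define g where "g x = min 1 (infdist x K)" for x :: "real^'n"
  have gc: "continuous_on UNIV g" unfolding g_def by (intro continuous_intros continuous_on_infdist continuous_on_id)
  have gnn: "0 \<le> g x" for x unfolding g_def by (simp add: infdist_nonneg)
  have gb: "\<bar>g x\<bar> \<le> 1" for x using gnn[of x] unfolding g_def by simp
  have gE: "g \<in> E" by (rule E_bounded[where B=1]) (simp add: gb)
  have zE: "(\<lambda>_. 0::real) \<in> E" by (rule E_bounded[where B=0]) simp
  have "Lam g \<le> Lam (\<lambda>_. 0)" by (rule Lam_mono[OF gE zE]) (simp add: g_def infdist_zero)
  moreover have "0 \<le> Lam g" by (rule Lam_pos[OF gE]) (simp add: gnn)
  ultimately have L0: "Lam g = 0" using Lam_const[of 0] by simp
  have "integral\<^sup>L rho (\<lambda>\<omega>. indicator Zs \<omega> * g (Phi \<omega>)) = 0" using GL(2)[OF gc gb] L0 by simp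
  then have "AE \<omega> in rho. indicator Zs \<omega> * g (Phi \<omega>) = 0"
    using integral_nonneg_eq_0_iff_AE[OF GL(1)[OF gc gb]] gnn by (simp add: indicator_def)
  then show ?thesis using AE_Zs
  proof eventually_elim
    fix \<omega> assume "indicator Zs \<omega> * g (Phi \<omega>) = 0" "\<omega> \<in> Zs"
    then have "g (Phi \<omega>) = 0" by simp
    then have "infdist (Phi \<omega>) K = 0" unfolding g_def by (simp add: min_def split: if_splits)
    then show "Phi \<omega> \<in> K" using in_closed_iff_infdist_zero[OF clK neK] by simp
  qed
qed

end


context hav
begin

lemma TR:
  fixes p :: "real^'n \<Rightarrow> real"
  assumes pc: "continuous_on UNIV p" and pb: "\<And>x. \<bar>p x\<bar> \<le> \<bar>mono_eval \<alpha> x\<bar>"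
  shows "integrable rho (\<lambda>\<omega>. indicator Zs \<omega> * (p (Phi \<omega>) * tau R (Phi \<omega>)))"
    and "integral\<^sup>L rho (\<lambda>\<omega>. indicator Zs \<omega> * (p (Phi \<omega>) * tau R (Phi \<omega>))) = Lam (\<lambda>x. p x * tau R x)"
    and "(\<lambda>R. Lam (\<lambda>x. p x * tau R x)) \<longlonglongrightarrow> Lam p"
proof -
  define Bm where "Bm R = (\<Prod>i\<in>UNIV. (real R + 2) ^ \<alpha> i)" for R
  have gc: "continuous_on UNIV (\<lambda>x. p x * tau R x)" for R by (intro continuous_on_mult pc tau_cont)
  have gb: "\<bar>p x * tau R x\<bar> \<le> Bm R" for x R
  proof -
    have "\<bar>p x * tau R x\<bar> = \<bar>p x\<bar> * tau R x" using tau_bounds[of R x] by (simp add: abs_mult)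
    also have "\<dots> \<le> \<bar>mono_eval \<alpha> x\<bar> * tau R x" by (rule mult_right_mono[OF pb]) (simp add: tau_bounds)
    also have "\<dots> \<le> Bm R" unfolding Bm_def by (rule mono_tau_bound)
    finally show ?thesis .
  qed
  show "integrable rho (\<lambda>\<omega>. indicator Zs \<omega> * (p (Phi \<omega>) * tau R (Phi \<omega>)))"
    using GL(1)[OF gc gb] .
  show "integral\<^sup>L rho (\<lambda>\<omega>. indicator Zs \<omega> * (p (Phi \<omega>) * tau R (Phi \<omega>))) = Lam (\<lambda>x. p x * tau R x)"
    using GL(2)[OF gc gb] .
  define m where "m = mono_eval \<alpha>"
  define m2 where "m2 = mono_eval (\<lambda>j. \<alpha> j + \<alpha> j)"
  have m2_eq: "m2 x = m x * m x" for x unfolding m2_def m_def by (rule mono_eval_add)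
  define W where "W x = (\<Sum>i\<in>UNIV. mono_eval (\<lambda>j. (\<alpha> j + \<alpha> j) + ei i j) x)" for x
  have W_eq: "W x = m2 x * sqn x" for x
    unfolding W_def mono_eval_add m2_def sqn_def by (simp add: mono_ei sum_distrib_left)
  have WE: "W \<in> E"
  proof -
    have h: "(\<lambda>x. \<Sum>i\<in>UNIV. mono_eval (\<lambda>j. (\<alpha> j + \<alpha> j) + ei i j) x) \<in> E \<and> Lam (\<lambda>x. \<Sum>i\<in>UNIV. mono_eval (\<lambda>j. (\<alpha> j + \<alpha> j) + ei i j) x) = (\<Sum>i\<in>UNIV. Lam (mono_eval (\<lambda>j. (\<alpha> j + \<alpha> j) + ei i j)))"
      by (rule Lam_sum) (simp_all add: mono_E)
    then show ?thesis unfolding W_def[abs_def] by blast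
  qed
  define Q where "Q x = (1/2) * (sqn x + W x)" for x
  have QE: "Q \<in> E" unfolding Q_def[abs_def] by (intro E_smul E_add sqn_E WE)
  have oneE: "(\<lambda>_. 1::real) \<in> E" by (rule E_bounded[where B=1]) simp
  have m2E: "m2 \<in> E" unfolding m2_def by (rule mono_E)
  have ebE: "(\<lambda>x. (1/2) * (1 + m2 x)) \<in> E" by (intro E_smul E_add oneE m2E)
  have absm: "\<bar>m x\<bar> \<le> (1/2) * (1 + m2 x)" for x
  proof -
    have "0 \<le> (\<bar>m x\<bar> - 1)^2" by simp
    then show ?thesis unfolding m2_eq power2_eq_square by (simp add: algebra_simps abs_mult_self_eq)
  qed
  have pb2: "\<bar>p x\<bar> \<le> (1/2) * (1 + m2 x)" for x using pb[of x] absm[of x] unfolding m_def by linarith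
  have pE: "p \<in> E"
    by (rule E_abs_bound[OF ebE]) (use pb2 in blast)
  have gE: "(\<lambda>x. p x * tau R x) \<in> E" for R by (rule E_bounded[where B="Bm R"]) (simp add: gb)
  have pw: "\<bar>p x * tau R x - p x\<bar> \<le> (1 / (real R + 1)^2) * Q x" for x R
  proof -
    have e1: "p x * tau R x - p x = - ((1 - tau R x) * p x)" by (simp add: algebra_simps)
    have "\<bar>p x * tau R x - p x\<bar> = (1 - tau R x) * \<bar>p x\<bar>"
      unfolding e1 abs_minus_cancel abs_mult using tau_bounds[of R x] by simp
    also have "\<dots> \<le> (sqn x / (real R + 1)^2) * ((1/2) * (1 + m2 x))"
      by (rule mult_mono[OF tail_tau]) (use pb[of x] absm[of x] tau_bounds[of R x] sqn_nonneg[of x] in \<open>auto simp: m_def\<close>)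
    also have "\<dots> = (1 / (real R + 1)^2) * Q x" unfolding Q_def W_eq by (simp add: field_simps)
    finally show ?thesis .
  qed
  have bnd: "norm (Lam (\<lambda>x. p x * tau R x) - Lam p) \<le> (1 / (real R + 1)^2) * Lam Q" for R
  proof -
    have dE: "(\<lambda>x. p x * tau R x - p x) \<in> E" by (rule E_diff[OF gE pE])
    have sE: "(\<lambda>x. (1 / (real R + 1)^2) * Q x) \<in> E" by (rule E_smul[OF QE])
    have msE: "(\<lambda>x. - ((1 / (real R + 1)^2) * Q x)) \<in> E" using E_smul[OF QE, of "- (1 / (real R + 1)^2)"] by simp
    have pw1: "p x * tau R x - p x \<le> (1 / (real R + 1)^2) * Q x" for x using pw[of x R] by (simp add: abs_le_iff)
    have pw2: "- ((1 / (real R + 1)^2) * Q x) \<le> p x * tau R x - p x" for x using pw[of x R] by (simp add: abs_le_iff)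
    have "Lam (\<lambda>x. p x * tau R x - p x) \<le> Lam (\<lambda>x. (1 / (real R + 1)^2) * Q x)"
      by (rule Lam_mono[OF dE sE]) (use pw1 in blast)
    moreover have "Lam (\<lambda>x. - ((1 / (real R + 1)^2) * Q x)) \<le> Lam (\<lambda>x. p x * tau R x - p x)"
      by (rule Lam_mono[OF msE dE]) (use pw2 in blast)
    moreover have "Lam (\<lambda>x. - ((1 / (real R + 1)^2) * Q x)) = - ((1 / (real R + 1)^2) * Lam Q)"
      using Lam_smul[OF QE, of "- (1 / (real R + 1)^2)"] by simp
    moreover have "Lam (\<lambda>x. (1 / (real R + 1)^2) * Q x) = (1 / (real R + 1)^2) * Lam Q" by (rule Lam_smul[OF QE])
    moreover have "Lam (\<lambda>x. p x * tau R x - p x) = Lam (\<lambda>x. p x * tau R x) - Lam p" by (rule Lam_diff[OF gE pE])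
    ultimately show ?thesis by (simp add: abs_le_iff)
  qed
  have "(\<lambda>R::nat. 1 / (real R + 1)^2) \<longlonglongrightarrow> 0" by real_asymp
  then have c0: "(\<lambda>R. (1 / (real R + 1)^2) * Lam Q) \<longlonglongrightarrow> 0" by (rule tendsto_mult_left_zero)
  have "(\<lambda>R. Lam (\<lambda>x. p x * tau R x) - Lam p) \<longlonglongrightarrow> 0"
    by (rule Lim_null_comparison[OF _ c0]) (use bnd in simp)
  then have "(\<lambda>R. (Lam (\<lambda>x. p x * tau R x) - Lam p) + Lam p) \<longlonglongrightarrow> 0 + Lam p"
    by (intro tendsto_add tendsto_const)
  then show "(\<lambda>R. Lam (\<lambda>x. p x * tau R x)) \<longlonglongrightarrow> Lam p" by simp
qed

lemma moments:
  "integrable rho (\<lambda>\<omega>. mono_eval \<alpha> (Phi \<omega>)) \<and> integral\<^sup>L rho (\<lambda>\<omega>. mono_eval \<alpha> (Phi \<omega>)) = s \<alpha>"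
proof -
  define m where "m = mono_eval \<alpha>"
  have mc: "continuous_on UNIV m" unfolding m_def by (rule continuous_mono_eval)
  have amc: "continuous_on UNIV (\<lambda>x. \<bar>m x\<bar>)" by (intro continuous_intros mc)
  have mPm: "(\<lambda>\<omega>. m (Phi \<omega>)) \<in> borel_measurable rho"
    by (rule measurable_compose[OF Phi_measurable borel_measurable_continuous_onI[OF mc]])
  define f where "f R \<omega> = indicator Zs \<omega> * (\<bar>m (Phi \<omega>)\<bar> * tau R (Phi \<omega>))" for R \<omega>
  have fi: "integrable rho (f R)" for R unfolding f_def m_def by (rule TR(1)[where \<alpha>=\<alpha>, OF amc[unfolded m_def]]) simp
  have fint: "integral\<^sup>L rho (f R) = Lam (\<lambda>x. \<bar>m x\<bar> * tau R x)" for R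
    unfolding f_def m_def by (rule TR(2)[where \<alpha>=\<alpha>, OF amc[unfolded m_def]]) simp
  have flim: "(\<lambda>R. f R \<omega>) \<longlonglongrightarrow> indicator Zs \<omega> * \<bar>m (Phi \<omega>)\<bar>" for \<omega>
  proof -
    have "eventually (\<lambda>R. f R \<omega> = indicator Zs \<omega> * \<bar>m (Phi \<omega>)\<bar>) sequentially"
      using tau_eventually[of "Phi \<omega>"] by eventually_elim (simp add: f_def)
    then show ?thesis by (rule tendsto_eventually)
  qed
  have fm: "f R \<in> borel_measurable rho" for R by (rule borel_measurable_integrable[OF fi])
  have um: "(\<lambda>\<omega>. indicator Zs \<omega> * \<bar>m (Phi \<omega>)\<bar>) \<in> borel_measurable rho"
    by (rule borel_measurable_LIMSEQ_real[OF flim fm])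
  have finc: "incseq (\<lambda>R. f R \<omega>)" for \<omega>
  proof (rule incseq_SucI)
    fix R
    have "tau R (Phi \<omega>) \<le> tau (Suc R) (Phi \<omega>)" by (rule tau_mono) simp
    then show "f R \<omega> \<le> f (Suc R) \<omega>" unfolding f_def by (intro mult_left_mono) (auto simp: indicator_def)
  qed
  have flim2: "(\<lambda>R. integral\<^sup>L rho (f R)) \<longlonglongrightarrow> Lam (\<lambda>x. \<bar>m x\<bar>)"
    unfolding fint m_def by (rule TR(3)[where \<alpha>=\<alpha>, OF amc[unfolded m_def]]) simp
  have wi: "integrable rho (\<lambda>\<omega>. indicator Zs \<omega> * \<bar>m (Phi \<omega>)\<bar>)"
    by (rule integrable_monotone_convergence[OF fi _ _ flim2 um]) (auto simp: finc flim)
  define h where "h R \<omega> = indicator Zs \<omega> * (m (Phi \<omega>) * tau R (Phi \<omega>))" for R \<omega>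
  have hi: "integrable rho (h R)" for R unfolding h_def m_def by (rule TR(1)[where \<alpha>=\<alpha>, OF mc[unfolded m_def]]) simp
  have hint: "integral\<^sup>L rho (h R) = Lam (\<lambda>x. m x * tau R x)" for R
    unfolding h_def m_def by (rule TR(2)[where \<alpha>=\<alpha>, OF mc[unfolded m_def]]) simp
  have hlim: "(\<lambda>R. h R \<omega>) \<longlonglongrightarrow> indicator Zs \<omega> * m (Phi \<omega>)" for \<omega>
  proof -
    have "eventually (\<lambda>R. h R \<omega> = indicator Zs \<omega> * m (Phi \<omega>)) sequentially"
      using tau_eventually[of "Phi \<omega>"] by eventually_elim (simp add: h_def)
    then show ?thesis by (rule tendsto_eventually)
  qed
  have hm: "h R \<in> borel_measurable rho" for R by (rule borel_measurable_integrable[OF hi])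
  have lm: "(\<lambda>\<omega>. indicator Zs \<omega> * m (Phi \<omega>)) \<in> borel_measurable rho"
    by (rule borel_measurable_LIMSEQ_real[OF hlim hm])
  have hb: "norm (h R \<omega>) \<le> indicator Zs \<omega> * \<bar>m (Phi \<omega>)\<bar>" for R \<omega>
  proof -
    have "\<bar>m (Phi \<omega>) * tau R (Phi \<omega>)\<bar> \<le> \<bar>m (Phi \<omega>)\<bar> * 1"
      unfolding abs_mult using tau_bounds[of R "Phi \<omega>"] by (intro mult_left_mono) auto
    then show ?thesis unfolding h_def by (auto simp: indicator_def abs_mult)
  qed
  have c1: "(\<lambda>R. integral\<^sup>L rho (h R)) \<longlonglongrightarrow> integral\<^sup>L rho (\<lambda>\<omega>. indicator Zs \<omega> * m (Phi \<omega>))"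
    by (rule integral_dominated_convergence[OF lm hm wi]) (use hb hlim in auto)
  have c2: "(\<lambda>R. integral\<^sup>L rho (h R)) \<longlonglongrightarrow> s \<alpha>"
  proof -
    have "(\<lambda>R. Lam (\<lambda>x. m x * tau R x)) \<longlonglongrightarrow> Lam m" unfolding m_def by (rule TR(3)[where \<alpha>=\<alpha>, OF mc[unfolded m_def]]) simp
    then show ?thesis unfolding hint m_def Lam_mono_eval .
  qed
  have int_eq: "integral\<^sup>L rho (\<lambda>\<omega>. indicator Zs \<omega> * m (Phi \<omega>)) = s \<alpha>" by (rule LIMSEQ_unique[OF c1 c2])
  have li: "integrable rho (\<lambda>\<omega>. indicator Zs \<omega> * m (Phi \<omega>))"
    by (rule Bochner_Integration.integrable_bound[OF wi lm]) (auto simp: indicator_def)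
  have ae: "AE \<omega> in rho. m (Phi \<omega>) = indicator Zs \<omega> * m (Phi \<omega>)"
    using AE_Zs by eventually_elim simp
  have "integrable rho (\<lambda>\<omega>. m (Phi \<omega>))" using integrable_cong_AE[OF mPm lm ae] li by simp
  moreover have "integral\<^sup>L rho (\<lambda>\<omega>. m (Phi \<omega>)) = s \<alpha>" using integral_cong_AE[OF mPm lm ae] int_eq by simp
  ultimately show ?thesis unfolding m_def by simp
qed

theorem moment_result: "moment_seq (sharp K) s"
proof -
  have sK: "sharp K = K" by (rule sharp_eq[OF cvK cnK neK])
  define M where "M = distr rho borel Phi"
  have sM: "sets M = sets borel" unfolding M_def by simp
  have spM: "space M = UNIV" unfolding M_def by simp
  have oK: "open (- K)" using clK by (simp add: open_Compl)
  have cK: "UNIV - K \<in> sets borel" using borel_open[OF oK] by (simp add: Compl_eq_Diff_UNIV)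
  have "emeasure rho (Phi -` (UNIV - K) \<inter> space rho) = 0"
  proof -
    have N: "Phi -` (UNIV - K) \<inter> space rho \<in> sets rho" by (rule measurable_sets[OF Phi_measurable cK])
    have Ne: "{\<omega> \<in> space rho. \<not> Phi \<omega> \<in> K} = Phi -` (UNIV - K) \<inter> space rho" by auto
    show ?thesis by (rule AE_iff_measurable[THEN iffD1, OF N Ne AE_K])
  qed
  then have e0: "emeasure M (space M - sharp K) = 0"
    unfolding M_def sK by (simp add: emeasure_distr[OF Phi_measurable cK])
  have mm: "mono_eval \<alpha> \<in> borel_measurable borel" for \<alpha> :: "'n \<Rightarrow> nat"
    by (rule borel_measurable_continuous_onI[OF continuous_mono_eval])
  have mom: "integrable M (mono_eval \<alpha>) \<and> s \<alpha> = integral\<^sup>L M (mono_eval \<alpha>)" for \<alpha>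
    unfolding M_def using moments[of \<alpha>]
    by (simp add: integrable_distr_eq[OF Phi_measurable mm] integral_distr[OF Phi_measurable mm])
  show ?thesis unfolding moment_seq_def using sM e0 mom by blast
qed

end

theorem proposition4p16:
  fixes K :: "(real^'n::finite) set" and s :: "('n \<Rightarrow> nat) \<Rightarrow> real"
  assumes "closed K" and "convex K" and "cone K" and "K \<noteq> {}"
  shows "K_pos_preserver K (Dop s) \<longleftrightarrow> moment_seq (sharp K) s"
proof
  assume "K_pos_preserver K (Dop s)"
  then interpret hav K s using assms by unfold_locales
  show "moment_seq (sharp K) s" by (rule moment_result)
next
  assume m: "moment_seq (sharp K) s"
  have "closed (sharp K)" using sharp_eq[OF assms(2-4)] assms(1) by simp
  then show "K_pos_preserver K (Dop s)" by (rule moment_imp_preserver[OF m])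
qed


end
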